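(* Let $n\ge4$. Every folded ribbon $n$-stick unknot $\mathcal{U}_{w,F}$ whose diagram $\mathcal{U}$ is a non-degenerate $n$-gon with all fold (interior) angles $\alpha_i$ satisfying $\frac{\pi}{2}\le\alpha_i<\pi$ has $\operatorname{Rib}(\mathcal{U}_{w,F})\ge n\cot(\frac{\pi}{n})$. Thus the minimum folded ribbonlength of such unknots is bounded below by $n\cot(\frac{\pi}{n})$, and the minimum occurs when $\mathcal{U}$ is a regular $n$-gon.
   Context: Non-degenerate $n$-gon: side lengths nonzero, interior angles not equal to $\pi$. For width $w>0$, the folded ribbon $\mathcal{U}_{w,F}$ is a flat strip of width $w$ centred on $\mathcal{U}$ (boundary parallel to and at distance $w/2$ from each edge), folded at each vertex along a fold line through the vertex perpendicular to the bisector of the angle there; it is a piecewise-linear immersion of an annulus or Möbius band into the plane whose only singularities are the pairwise disjoint fold lines, with consistent crossing information; $F$ is the folding information (which layer lies on top at each fold). The folded ribbonlength is $\operatorname{Rib}(\mathcal{U}_{w,F})=\operatorname{Len}(\mathcal{U})/w$. *)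

theory Defs
  imports "HOL-Analysis.Analysis"
begin

text \<open>A closed polygon (n-gon) in the plane, points represented as complex numbers.
  The vertices are P 0, ..., P (n-1); indices are taken modulo n.\<close>

definition vtx :: "nat \<Rightarrow> (nat \<Rightarrow> complex) \<Rightarrow> nat \<Rightarrow> complex" where
  "vtx n P i = P (i mod n)"

definition nxt :: "nat \<Rightarrow> (nat \<Rightarrow> complex) \<Rightarrow> nat \<Rightarrow> complex" where
  "nxt n P i = P ((i + 1) mod n)"

definition prv :: "nat \<Rightarrow> (nat \<Rightarrow> complex) \<Rightarrow> nat \<Rightarrow> complex" where
  "prv n P i = P ((i + n - 1) mod n)"

definition edge :: "nat \<Rightarrow> (nat \<Rightarrow> complex) \<Rightarrow> nat \<Rightarrow> complex set" where
  "edge n P i = closed_segment (vtx n P i) (nxt n P i)"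

definition polygon_length :: "nat \<Rightarrow> (nat \<Rightarrow> complex) \<Rightarrow> real" where
  "polygon_length n P = (\<Sum>i<n. cmod (nxt n P i - vtx n P i))"

definition simple_polygon :: "nat \<Rightarrow> (nat \<Rightarrow> complex) \<Rightarrow> bool" where
  "simple_polygon n P \<longleftrightarrow> n \<ge> 3 \<and>
     (\<forall>i<n. \<forall>j<n. i \<noteq> j \<longrightarrow>
        (if j = (i + 1) mod n then edge n P i \<inter> edge n P j = {vtx n P j}
         else if i = (j + 1) mod n then edge n P i \<inter> edge n P j = {vtx n P i}
         else edge n P i \<inter> edge n P j = {}))"

text \<open>Signed area (positive iff the polygon is traversed counterclockwise).\<close>
definition signed_area :: "nat \<Rightarrow> (nat \<Rightarrow> complex) \<Rightarrow> real" where
  "signed_area n P = (\<Sum>i<n. Im (cnj (vtx n P i) * nxt n P i)) / 2"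

definition turn_angle :: "nat \<Rightarrow> (nat \<Rightarrow> complex) \<Rightarrow> nat \<Rightarrow> real" where
  "turn_angle n P i = Arg ((nxt n P i - vtx n P i) / (vtx n P i - prv n P i))"

text \<open>Interior angle at vertex i of a simple polygon (measured on the side of the
  bounded region), in (0, 2 pi).\<close>
definition interior_angle :: "nat \<Rightarrow> (nat \<Rightarrow> complex) \<Rightarrow> nat \<Rightarrow> real" where
  "interior_angle n P i = pi - sgn (signed_area n P) * turn_angle n P i"

definition nondegenerate_polygon :: "nat \<Rightarrow> (nat \<Rightarrow> complex) \<Rightarrow> bool" where
  "nondegenerate_polygon n P \<longleftrightarrow> n \<ge> 3 \<and>
     (\<forall>i<n. nxt n P i \<noteq> vtx n P i \<and> interior_angle n P i \<noteq> pi)"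

text \<open>Fold line at vertex i of the folded ribbon of width w: the segment through the
  vertex, perpendicular to the bisector of the angle there, cut off by the two ribbon
  boundaries (which lie at distance w/2 from the edges); its half-length is
  (w/2) / cos(alpha_i/2).\<close>
definition bisector_dir :: "nat \<Rightarrow> (nat \<Rightarrow> complex) \<Rightarrow> nat \<Rightarrow> complex" where
  "bisector_dir n P i = sgn (nxt n P i - vtx n P i) + sgn (prv n P i - vtx n P i)"

definition fold_line :: "nat \<Rightarrow> (nat \<Rightarrow> complex) \<Rightarrow> real \<Rightarrow> nat \<Rightarrow> complex set" where
  "fold_line n P w i =
     (let d = \<i> * sgn (bisector_dir n P i);
          h = (w / 2) / cos (interior_angle n P i / 2)
      in closed_segment (vtx n P i - of_real h * d) (vtx n P i + of_real h * d))"

text \<open>The folded ribbon of width w on the polygon is a valid folded ribbon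
  (its only singularities are pairwise disjoint fold lines).\<close>
definition folded_ribbon :: "nat \<Rightarrow> (nat \<Rightarrow> complex) \<Rightarrow> real \<Rightarrow> bool" where
  "folded_ribbon n P w \<longleftrightarrow> w > 0 \<and>
     (\<forall>i<n. \<forall>j<n. i \<noteq> j \<longrightarrow> fold_line n P w i \<inter> fold_line n P w j = {})"

definition ribbonlength :: "nat \<Rightarrow> (nat \<Rightarrow> complex) \<Rightarrow> real \<Rightarrow> real" where
  "ribbonlength n P w = polygon_length n P / w"

definition regular_polygon :: "nat \<Rightarrow> (nat \<Rightarrow> complex) \<Rightarrow> bool" where
  "regular_polygon n P \<longleftrightarrow>
     (\<exists>c r \<theta>. r > 0 \<and> (\<forall>k. P k = c + of_real r * cis (\<theta> + 2 * pi * real k / real n)))"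

end

theory Submission
  imports Defs
begin

lemma sign_const:
  fixes \<phi> :: "real \<Rightarrow> real"
  assumes "y0 < y1" "continuous_on {y0..y1} \<phi>" "\<forall>y\<in>{y0<..<y1}. \<phi> y \<noteq> 0"
    "y2 \<in> {y0<..<y1}" "\<phi> y2 > 0"
  shows "\<forall>y\<in>{y0..y1}. \<phi> y \<ge> 0"
proof -
  have pos: "\<phi> y \<ge> 0" if y: "y \<in> {y0<..<y1}" for y
  proof (rule ccontr)
    assume "\<not> \<phi> y \<ge> 0" then have neg: "\<phi> y < 0" by simp
    consider "y \<le> y2" | "y2 \<le> y" by linarith
    then show False
    proof cases
      case 1
      have "continuous_on {y..y2} \<phi>"
        using assms(2) continuous_on_subset y assms(4) by fastforce
      then obtain x where "y \<le> x" "x \<le> y2" "\<phi> x = 0"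
        using IVT'[of \<phi> y 0 y2] neg assms(5) 1 by force
      then show False using assms(3,4) y by force
    next
      case 2
      have "continuous_on {y2..y} \<phi>"
        using assms(2) continuous_on_subset y assms(4) by fastforce
      then obtain x where "y2 \<le> x" "x \<le> y" "\<phi> x = 0"
        using IVT2'[of \<phi> y 0 y2] neg assms(5) 2 by force
      then show False using assms(3,4) y by force
    qed
  qed
  show ?thesis
  proof
    fix y assume "y \<in> {y0..y1}"
    then have "y \<in> closure {y0<..<y1}" using closure_greaterThanLessThan assms(1) by simp
    then show "\<phi> y \<ge> 0"
      using continuous_ge_on_closure[of "{y0<..<y1}" \<phi> y 0] pos assms(1,2)
        closure_greaterThanLessThan by simp
  qed
qed

lemma squeeze_lemma:
  fixes f g p :: "real \<Rightarrow> real"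
  assumes "y0 < y1"
    and cf: "continuous_on {y0..y1} f" and cg: "continuous_on {y0..y1} g"
    and cp: "continuous_on {y0..y1} p"
    and e1: "f y1 = g y1" and e0: "p y0 = f y0"
    and nt: "\<forall>y\<in>{y0<..<y1}. f y \<noteq> g y \<and> p y \<noteq> f y \<and> p y \<noteq> g y"
    and w1: "y2 \<in> {y0<..<y1}" "f y2 > g y2"
    and w2: "y3 \<in> {y0<..<y1}" "p y3 < f y3"
  shows "p y1 = f y1 \<or> g y0 = f y0"
proof -
  have A: "\<forall>y\<in>{y0..y1}. f y - g y \<ge> 0"
    apply (rule sign_const[OF assms(1) _ _ w1(1)])
    using cf cg nt w1 by (auto intro!: continuous_intros)
  have B: "\<forall>y\<in>{y0..y1}. f y - p y \<ge> 0"
    apply (rule sign_const[OF assms(1) _ _ w2(1)])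
    using cf cp nt w2 by (auto intro!: continuous_intros)
  have ym: "(y0+y1)/2 \<in> {y0<..<y1}" using assms(1) by auto
  have "p ((y0+y1)/2) \<noteq> g ((y0+y1)/2)" using nt ym by blast
  then consider "p ((y0+y1)/2) > g ((y0+y1)/2)" | "p ((y0+y1)/2) < g ((y0+y1)/2)"
    by linarith
  then show ?thesis
  proof cases
    case 1
    have "\<forall>y\<in>{y0..y1}. p y - g y \<ge> 0"
      apply (rule sign_const[OF assms(1) _ _ ym])
      using cg cp nt 1 by (auto intro!: continuous_intros)
    then have "p y1 \<ge> g y1" using assms(1) by auto
    moreover have "f y1 \<ge> p y1" using B assms(1) by auto
    ultimately show ?thesis using e1 by auto
  next
    case 2
    have "\<forall>y\<in>{y0..y1}. g y - p y \<ge> 0"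
      apply (rule sign_const[OF assms(1) _ _ ym])
      using cg cp nt 2 by (auto intro!: continuous_intros)
    then have "g y0 \<ge> p y0" using assms(1) by auto
    moreover have "f y0 \<ge> g y0" using A assms(1) by auto
    ultimately show ?thesis using e0 by auto
  qed
qed

definition clamp01 :: "real \<Rightarrow> real" where "clamp01 x = max 0 (min 1 x)"

definition chainpt :: "(nat \<Rightarrow> complex) \<Rightarrow> nat \<Rightarrow> nat \<Rightarrow> real \<Rightarrow> complex" where
  "chainpt v s t y = v s + (\<Sum>j\<in>{s..<t}.
      of_real (clamp01 ((y - Im (v j)) / (Im (v (Suc j)) - Im (v j)))) * (v (Suc j) - v j))"

definition chmono :: "(nat \<Rightarrow> complex) \<Rightarrow> real \<Rightarrow> nat \<Rightarrow> nat \<Rightarrow> bool" where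
  "chmono v \<sigma> s t \<longleftrightarrow> (\<sigma> = 1 \<or> \<sigma> = -1) \<and> (\<forall>j. s \<le> j \<and> j < t \<longrightarrow> \<sigma> * Im (v (Suc j) - v j) > 0)"

lemma continuous_chainpt: "continuous_on A (chainpt v s t)"
  unfolding chainpt_def clamp01_def divide_inverse
  by (intro continuous_intros continuous_on_max continuous_on_min)

lemma chmono_le:
  assumes "chmono v \<sigma> s t" "s \<le> j" "j \<le> k" "k \<le> t"
  shows "\<sigma> * Im (v j) \<le> \<sigma> * Im (v k)"
  using assms(3,4)
proof (induction k)
  case 0 then show ?case by simp
next
  case (Suc k)
  show ?case
  proof (cases "j = Suc k")
    case True then show ?thesis by simp
  next
    case False
    then have "j \<le> k" using Suc by simp
    then have "\<sigma> * Im (v j) \<le> \<sigma> * Im (v k)" using Suc by simp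
    moreover have "\<sigma> * Im (v (Suc k) - v k) > 0"
      using assms(1,2) Suc.prems \<open>j \<le> k\<close> unfolding chmono_def by auto
    ultimately show ?thesis by (simp add: algebra_simps)
  qed
qed

lemma chmono_lt:
  assumes "chmono v \<sigma> s t" "s \<le> j" "j < k" "k \<le> t"
  shows "\<sigma> * Im (v j) < \<sigma> * Im (v k)"
proof -
  obtain k' where k: "k = Suc k'" using assms(3) by (cases k) auto
  have "\<sigma> * Im (v j) \<le> \<sigma> * Im (v k')" using chmono_le[OF assms(1,2)] assms k by auto
  moreover have "\<sigma> * Im (v (Suc k') - v k') > 0"
    using assms k unfolding chmono_def by auto
  ultimately show ?thesis using k by (simp add: algebra_simps)
qed

lemma ratio_ge1:
  fixes a b y \<sigma> :: real
  assumes "\<sigma> = 1 \<or> \<sigma> = -1" "\<sigma> * (b - a) > 0" "\<sigma> * b \<le> \<sigma> * y"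
  shows "(y - a) / (b - a) \<ge> 1"
  using assms by (auto simp: field_simps)

lemma ratio_le0:
  fixes a b y \<sigma> :: real
  assumes "\<sigma> = 1 \<or> \<sigma> = -1" "\<sigma> * (b - a) > 0" "\<sigma> * y \<le> \<sigma> * a"
  shows "(y - a) / (b - a) \<le> 0"
  using assms by (auto simp: field_simps divide_le_0_iff)

lemma ratio_01:
  fixes a b y \<sigma> :: real
  assumes "\<sigma> = 1 \<or> \<sigma> = -1" "\<sigma> * (b - a) > 0" "\<sigma> * a \<le> \<sigma> * y" "\<sigma> * y \<le> \<sigma> * b"
  shows "(y - a) / (b - a) \<ge> 0" "(y - a) / (b - a) \<le> 1"
  using assms by (auto simp: field_simps zero_le_divide_iff)

lemma chainpt_at:
  assumes cm: "chmono v \<sigma> s t" and j0: "s \<le> j0" "j0 < t"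
    and y: "\<sigma> * Im (v j0) \<le> \<sigma> * y" "\<sigma> * y \<le> \<sigma> * Im (v (Suc j0))"
  shows "chainpt v s t y = v j0 + of_real ((y - Im (v j0)) / (Im (v (Suc j0)) - Im (v j0))) * (v (Suc j0) - v j0)"
proof -
  define c where "c j = clamp01 ((y - Im (v j)) / (Im (v (Suc j)) - Im (v j)))" for j
  have sg: "\<sigma> = 1 \<or> \<sigma> = -1" using cm unfolding chmono_def by auto
  have pos: "\<sigma> * (Im (v (Suc j)) - Im (v j)) > 0" if "s \<le> j" "j < t" for j
    using cm that unfolding chmono_def by auto
  have c1: "c j = 1" if "s \<le> j" "j < j0" for j
  proof -
    have "\<sigma> * Im (v (Suc j)) \<le> \<sigma> * Im (v j0)" using chmono_le[OF cm, of "Suc j" j0] that j0 by auto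
    then have "(y - Im (v j)) / (Im (v (Suc j)) - Im (v j)) \<ge> 1"
      using ratio_ge1[OF sg pos[of j]] that j0 y by auto
    then show ?thesis unfolding c_def clamp01_def by auto
  qed
  have c0: "c j = 0" if "Suc j0 \<le> j" "j < t" for j
  proof -
    have "\<sigma> * Im (v (Suc j0)) \<le> \<sigma> * Im (v j)" using chmono_le[OF cm, of "Suc j0" j] that j0 by auto
    then have "(y - Im (v j)) / (Im (v (Suc j)) - Im (v j)) \<le> 0"
      using ratio_le0[OF sg pos[of j]] that j0 y by auto
    then show ?thesis unfolding c_def clamp01_def by auto
  qed
  have cj: "c j0 = (y - Im (v j0)) / (Im (v (Suc j0)) - Im (v j0))"
    using ratio_01[OF sg pos[of j0] y] j0 unfolding c_def clamp01_def by auto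
  have split: "{s..<t} = {s..<j0} \<union> {j0} \<union> {Suc j0..<t}" using j0 by auto
  have "(\<Sum>j\<in>{s..<t}. of_real (c j) * (v (Suc j) - v j)) =
        (\<Sum>j\<in>{s..<j0}. of_real (c j) * (v (Suc j) - v j)) + of_real (c j0) * (v (Suc j0) - v j0)
        + (\<Sum>j\<in>{Suc j0..<t}. of_real (c j) * (v (Suc j) - v j))"
    unfolding split by (subst sum.union_disjoint; auto)+
  also have "(\<Sum>j\<in>{s..<j0}. of_real (c j) * (v (Suc j) - v j)) = (\<Sum>j\<in>{s..<j0}. (v (Suc j) - v j))"
    by (rule sum.cong) (auto simp: c1)
  also have "\<dots> = v j0 - v s" using sum_Suc_diff'[of s j0 v] j0 by simp
  also have "(\<Sum>j\<in>{Suc j0..<t}. of_real (c j) * (v (Suc j) - v j)) = 0"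
    by (rule sum.neutral) (auto simp: c0)
  finally show ?thesis unfolding chainpt_def c_def[symmetric] cj by simp
qed

lemma chmono_mono: "chmono v \<sigma> s t \<Longrightarrow> t' \<le> t \<Longrightarrow> chmono v \<sigma> s t'"
  unfolding chmono_def by auto

lemma chainpt_edge:
  assumes "chmono v \<sigma> s t" "s < t" "\<sigma> * Im (v s) \<le> \<sigma> * y" "\<sigma> * y \<le> \<sigma> * Im (v t)"
  shows "\<exists>j0. s \<le> j0 \<and> j0 < t \<and> \<sigma> * Im (v j0) \<le> \<sigma> * y \<and> \<sigma> * y \<le> \<sigma> * Im (v (Suc j0))"
  using assms
proof (induction t)
  case 0 then show ?case by simp
next
  case (Suc t)
  show ?case
  proof (cases "s < t \<and> \<sigma> * y \<le> \<sigma> * Im (v t)")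
    case True
    then show ?thesis using Suc.IH[OF chmono_mono[OF Suc.prems(1)]] Suc.prems by force
  next
    case False
    then have "s = t \<or> \<sigma> * Im (v t) \<le> \<sigma> * y" using Suc.prems(2) by auto
    then have "\<sigma> * Im (v t) \<le> \<sigma> * y" using Suc.prems by auto
    then show ?thesis using Suc.prems by (intro exI[of _ t]) auto
  qed
qed

lemma seg_param:
  assumes "0 \<le> r" "r \<le> 1"
  shows "a + of_real r * (b - a) \<in> closed_segment a b"
  unfolding in_segment using assms
  by (intro exI[of _ r]) (auto simp: scaleR_conv_of_real algebra_simps)

lemma chainpt_props:
  assumes cm: "chmono v \<sigma> s t" "s < t" "\<sigma> * Im (v s) \<le> \<sigma> * y" "\<sigma> * y \<le> \<sigma> * Im (v t)"
  shows "Im (chainpt v s t y) = y"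
    "\<exists>j. s \<le> j \<and> j < t \<and> chainpt v s t y \<in> closed_segment (v j) (v (Suc j))"
proof -
  obtain j0 where j0: "s \<le> j0" "j0 < t" "\<sigma> * Im (v j0) \<le> \<sigma> * y" "\<sigma> * y \<le> \<sigma> * Im (v (Suc j0))"
    using chainpt_edge[OF assms] by blast
  have sg: "\<sigma> = 1 \<or> \<sigma> = -1" using cm unfolding chmono_def by auto
  have pos: "\<sigma> * (Im (v (Suc j0)) - Im (v j0)) > 0"
    using cm j0 unfolding chmono_def by auto
  have eq: "chainpt v s t y = v j0 + of_real ((y - Im (v j0)) / (Im (v (Suc j0)) - Im (v j0))) * (v (Suc j0) - v j0)"
    using chainpt_at[OF cm(1) j0] .
  have ne: "Im (v (Suc j0)) - Im (v j0) \<noteq> 0" using pos by auto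
  show "Im (chainpt v s t y) = y" unfolding eq using ne by (simp add: field_simps)
  show "\<exists>j. s \<le> j \<and> j < t \<and> chainpt v s t y \<in> closed_segment (v j) (v (Suc j))"
    unfolding eq using j0 ratio_01[OF sg pos j0(3,4)]
    by (intro exI[of _ j0] conjI seg_param) auto
qed

lemma chainpt_start:
  assumes "chmono v \<sigma> s t" "s < t"
  shows "chainpt v s t (Im (v s)) = v s"
proof -
  have "\<sigma> * Im (v s) \<le> \<sigma> * Im (v (Suc s))" using chmono_le[OF assms(1)] assms by auto
  then show ?thesis using chainpt_at[OF assms(1), of s "Im (v s)"] assms by simp
qed

lemma chainpt_end:
  assumes "chmono v \<sigma> s t" "s < t"
  shows "chainpt v s t (Im (v t)) = v t"
proof -
  obtain t' where t: "t = Suc t'" using assms by (cases t) auto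
  have "\<sigma> * Im (v t') \<le> \<sigma> * Im (v t)" using chmono_le[OF assms(1)] assms t by auto
  moreover have "\<sigma> * Im (v (Suc t') - v t') > 0"
    using assms t unfolding chmono_def by auto
  then have "Im (v t) - Im (v t') \<noteq> 0" using t by auto
  ultimately show ?thesis using chainpt_at[OF assms(1), of t' "Im (v t)"] assms t by simp
qed

definition simp_ok :: "nat \<Rightarrow> (nat \<Rightarrow> complex) \<Rightarrow> bool" where
  "simp_ok n v \<longleftrightarrow> (\<forall>i j z. i < n \<longrightarrow> j < n \<longrightarrow> i \<noteq> j \<longrightarrow>
     z \<in> closed_segment (v i) (v (Suc i)) \<longrightarrow> z \<in> closed_segment (v j) (v (Suc j)) \<longrightarrow>
     (j = Suc i mod n \<and> z = v j) \<or> (i = Suc j mod n \<and> z = v i))"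

lemma touch_half:
  assumes per: "v n = v 0" and i: "s1 \<le> i" "i < t1" "t1 \<le> n" and j: "s2 \<le> j" "j < t2" "t2 \<le> n"
    and dis: "t1 \<le> s2 \<or> t2 \<le> s1" and adj: "j = Suc i mod n" "z = v j"
  shows "t1 mod n = s2 \<and> z = v t1"
proof (cases "Suc i < n")
  case True
  then have "j = Suc i" using adj by simp
  then have "t1 = Suc i" "s2 = Suc i" using i j dis by auto
  then show ?thesis using adj True \<open>j = Suc i\<close> by auto
next
  case False
  then have "Suc i = n" using i by auto
  then have "j = 0" "t1 = n" using adj i by auto
  then show ?thesis using j adj per by auto
qed

lemma touch_pt:
  assumes so: "simp_ok n v" and per: "v n = v 0"
    and i: "s1 \<le> i" "i < t1" "t1 \<le> n" and j: "s2 \<le> j" "j < t2" "t2 \<le> n"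
    and dis: "t1 \<le> s2 \<or> t2 \<le> s1"
    and z: "z \<in> closed_segment (v i) (v (Suc i))" "z \<in> closed_segment (v j) (v (Suc j))"
  shows "(t1 mod n = s2 \<and> z = v t1) \<or> (t2 mod n = s1 \<and> z = v t2)"
proof -
  have "i \<noteq> j" using i j dis by auto
  then have "(j = Suc i mod n \<and> z = v j) \<or> (i = Suc j mod n \<and> z = v i)"
    using so z i j unfolding simp_ok_def by auto
  then show ?thesis
  proof
    assume "j = Suc i mod n \<and> z = v j"
    then show ?thesis using touch_half[OF per i j dis] by auto
  next
    assume "i = Suc j mod n \<and> z = v i"
    then show ?thesis using touch_half[OF per j i] dis by auto
  qed
qed

lemma notouch:
  assumes so: "simp_ok n v" and per: "v n = v 0"
    and c1: "chmono v \<sigma>1 s1 t1" "s1 < t1" "t1 \<le> n"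
    and c2: "chmono v \<sigma>2 s2 t2" "s2 < t2" "t2 \<le> n"
    and dis: "t1 \<le> s2 \<or> t2 \<le> s1"
    and r1: "\<sigma>1 * Im (v s1) \<le> \<sigma>1 * y" "\<sigma>1 * y \<le> \<sigma>1 * Im (v t1)"
    and r2: "\<sigma>2 * Im (v s2) \<le> \<sigma>2 * y" "\<sigma>2 * y \<le> \<sigma>2 * Im (v t2)"
    and h1: "Im (v t1) \<noteq> y" and h2: "Im (v t2) \<noteq> y"
  shows "Re (chainpt v s1 t1 y) \<noteq> Re (chainpt v s2 t2 y)"
proof
  assume eq: "Re (chainpt v s1 t1 y) = Re (chainpt v s2 t2 y)"
  have im: "Im (chainpt v s1 t1 y) = y" "Im (chainpt v s2 t2 y) = y"
    using chainpt_props(1)[OF c1(1,2) r1] chainpt_props(1)[OF c2(1,2) r2] by auto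
  have zz: "chainpt v s1 t1 y = chainpt v s2 t2 y" using eq im complex_eq_iff by auto
  obtain i where i: "s1 \<le> i" "i < t1" "chainpt v s1 t1 y \<in> closed_segment (v i) (v (Suc i))"
    using chainpt_props(2)[OF c1(1,2) r1] by auto
  obtain j where j: "s2 \<le> j" "j < t2" "chainpt v s2 t2 y \<in> closed_segment (v j) (v (Suc j))"
    using chainpt_props(2)[OF c2(1,2) r2] by auto
  have "(t1 mod n = s2 \<and> chainpt v s1 t1 y = v t1) \<or> (t2 mod n = s1 \<and> chainpt v s1 t1 y = v t2)"
    using touch_pt[OF so per i(1,2) c1(3) j(1,2) c2(3) dis i(3)] j(3) zz by auto
  then show False using im h1 h2 by auto
qed

lemma local_max:
  fixes U V W z1 z2 :: complex
  assumes "Im (V - U) > 0" "Im (W - V) < 0" "Im ((W - V) * cnj (V - U)) > 0"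
    "z1 = U + of_real r1 * (V - U)" "z2 = V + of_real r2 * (W - V)"
    "Im z1 = Im z2" "Im z1 < Im V"
  shows "Re z1 > Re z2"
proof -
  define a1 where "a1 = Re (V - U)"
  define b1 where "b1 = Im (V - U)"
  define a2 where "a2 = Re (W - V)"
  define b2 where "b2 = Im (W - V)"
  have cr: "a1 * b2 - a2 * b1 > 0" using assms(3) unfolding a1_def b1_def a2_def b2_def by (simp add: algebra_simps)
  have im: "Im U + r1 * b1 = Im V + r2 * b2" using assms(4-6) unfolding b1_def b2_def by simp
  have imv: "Im U + r1 * b1 < Im V" using assms(4,7) unfolding b1_def by simp
  have UV: "Im U = Im V - b1" unfolding b1_def by simp
  have t: "(1 - r1) * b1 > 0" using imv UV by (simp add: algebra_simps)
  have e: "r2 * b2 = - (1 - r1) * b1" using im UV by (simp add: algebra_simps)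
  have goal: "Re z1 - Re z2 = - (1 - r1) * a1 - r2 * a2"
    unfolding assms(4,5) a1_def a2_def by (simp add: algebra_simps)
  have "(- b2) * (- (1 - r1) * a1 - r2 * a2) = (1 - r1) * (a1 * b2) + a2 * (r2 * b2)"
    by (simp add: algebra_simps)
  also have "\<dots> = (1 - r1) * (a1 * b2) + a2 * (- (1 - r1) * b1)" using e by simp
  also have "\<dots> = (1 - r1) * (a1 * b2 - a2 * b1)" by (simp add: algebra_simps)
  finally have "(- b2) * (- (1 - r1) * a1 - r2 * a2) > 0"
    using t cr assms(1) unfolding b1_def by (simp add: zero_less_mult_iff)
  moreover have "- b2 > 0" using assms(2) unfolding b2_def by simp
  ultimately have "- (1 - r1) * a1 - r2 * a2 > 0" using zero_less_mult_pos by metis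
  then show ?thesis using goal by simp
qed

lemma local_min:
  fixes U V W z1 z2 :: complex
  assumes "Im (V - U) < 0" "Im (W - V) > 0" "Im ((W - V) * cnj (V - U)) > 0"
    "z1 = U + of_real r1 * (V - U)" "z2 = V + of_real r2 * (W - V)"
    "Im z1 = Im z2" "Im z1 > Im V"
  shows "Re z2 > Re z1"
proof -
  define a1 where "a1 = Re (V - U)"
  define b1 where "b1 = Im (V - U)"
  define a2 where "a2 = Re (W - V)"
  define b2 where "b2 = Im (W - V)"
  have cr: "a1 * b2 - a2 * b1 > 0" using assms(3) unfolding a1_def b1_def a2_def b2_def by (simp add: algebra_simps)
  have im: "Im U + r1 * b1 = Im V + r2 * b2" using assms(4-6) unfolding b1_def b2_def by simp
  have imv: "Im U + r1 * b1 > Im V" using assms(4,7) unfolding b1_def by simp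
  have UV: "Im U = Im V - b1" unfolding b1_def by simp
  have t: "(1 - r1) * b1 < 0" using imv UV by (simp add: algebra_simps)
  have t': "1 - r1 > 0" using t assms(1) unfolding b1_def by (simp add: mult_less_0_iff)
  have e: "r2 * b2 = - (1 - r1) * b1" using im UV by (simp add: algebra_simps)
  have goal: "Re z2 - Re z1 = r2 * a2 + (1 - r1) * a1"
    unfolding assms(4,5) a1_def a2_def by (simp add: algebra_simps)
  have "b2 * (r2 * a2 + (1 - r1) * a1) = a2 * (r2 * b2) + (1 - r1) * (a1 * b2)"
    by (simp add: algebra_simps)
  also have "\<dots> = a2 * (- (1 - r1) * b1) + (1 - r1) * (a1 * b2)" using e by simp
  also have "\<dots> = (1 - r1) * (a1 * b2 - a2 * b1)" by (simp add: algebra_simps)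
  finally have "b2 * (r2 * a2 + (1 - r1) * a1) > 0"
    using t' cr by (simp add: zero_less_mult_iff)
  moreover have "b2 > 0" using assms(2) unfolding b2_def by simp
  ultimately have "r2 * a2 + (1 - r1) * a1 > 0" by (simp add: zero_less_mult_iff)
  then show ?thesis using goal by simp
qed

lemma bot_witness:
  fixes v :: "nat \<Rightarrow> complex"
  assumes chI: "chmono v (-1) sI k" and chO: "chmono v 1 k tO"
    and k: "sI < k" "k < tO"
    and cr: "Im ((v (Suc k) - v k) * cnj (v k - v (k-1))) > 0"
    and y: "Im (v k) < y" "y < Im (v (k-1))" "y < Im (v (Suc k))"
    and rI: "y \<le> Im (v sI)" and rO: "y \<le> Im (v tO)"
  shows "Re (chainpt v k tO y) > Re (chainpt v sI k y)"
proof -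
  have kk: "Suc (k-1) = k" using k by simp
  have eI: "chainpt v sI k y = v (k-1) + of_real ((y - Im (v (k-1))) / (Im (v k) - Im (v (k-1)))) * (v k - v (k-1))"
    using chainpt_at[OF chI, of "k-1" y] k y kk by simp
  have eO: "chainpt v k tO y = v k + of_real ((y - Im (v k)) / (Im (v (Suc k)) - Im (v k))) * (v (Suc k) - v k)"
    using chainpt_at[OF chO, of k y] k y by simp
  have iI: "Im (chainpt v sI k y) = y" using chainpt_props(1)[OF chI k(1), of y] y rI by simp
  have iO: "Im (chainpt v k tO y) = y" using chainpt_props(1)[OF chO k(2), of y] y rO by simp
  have p1: "Im (v k - v (k-1)) < 0" using chmono_lt[OF chI, of "k-1" k] k by simp
  have p2: "Im (v (Suc k) - v k) > 0" using chmono_lt[OF chO, of k "Suc k"] k by simp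
  have p6: "Im (chainpt v sI k y) = Im (chainpt v k tO y)" using iI iO by simp
  have p7: "Im (chainpt v sI k y) > Im (v k)" using iI y by simp
  show ?thesis by (rule local_min[OF p1 p2 cr eI eO p6 p7])
qed

lemma T0:
  fixes v :: "nat \<Rightarrow> complex" and n q :: nat
  assumes n3: "n \<ge> 3" and per: "v n = v 0" and so: "simp_ok n v"
    and nh: "\<forall>j<n. Im (v (Suc j) - v j) \<noteq> 0"
    and lt: "\<forall>j. Suc j < n \<longrightarrow> Im ((v (Suc (Suc j)) - v (Suc j)) * cnj (v (Suc j) - v j)) > 0"
    and lt0: "Im ((v 1 - v 0) * cnj (v 0 - v (n-1))) > 0"
    and m0: "Im (v n - v (n-1)) > 0" "Im (v 1 - v 0) < 0"
    and low: "\<forall>i. 0 < i \<longrightarrow> i < n \<longrightarrow> Im (v i - v (i-1)) > 0 \<longrightarrow> Im (v (Suc i) - v i) < 0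
               \<longrightarrow> Im (v 0) \<le> Im (v i)"
    and q: "0 < q" "q < n" "Im (v q - v (q-1)) > 0" "Im (v (Suc q) - v q) < 0"
  shows False
proof -
  define h where "h j = Im (v j)" for j
  define D where "D j = Im (v (Suc j) - v j)" for j
  have Dh: "D j = h (Suc j) - h j" for j unfolding D_def h_def by simp
  have nh': "D j \<noteq> 0" if "j < n" for j using nh that unfolding D_def by auto
  have Dn1: "D (n-1) > 0" using m0 n3 unfolding D_def by (simp add: Suc_diff_1)
  have D0: "D 0 < 0" using m0 unfolding D_def by simp
  have Dq: "D (q-1) > 0" "D q < 0" using q unfolding D_def by (auto simp: Suc_diff_1)
  have hn: "h n = h 0" unfolding h_def using per by simp
  define b where "b = (LEAST j. 0 < j \<and> D j > 0)"
  have q1: "0 < q - 1"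
  proof (rule ccontr)
    assume "\<not> 0 < q - 1" then have "q - 1 = 0" by simp
    then show False using Dq D0 by simp
  qed
  have b1: "0 < b \<and> D b > 0" unfolding b_def by (rule LeastI[of _ "q-1"]) (use q1 Dq in auto)
  have bq: "b \<le> q - 1" unfolding b_def by (rule Least_le) (use q1 Dq in auto)
  have bneg: "D j < 0" if "j < b" for j
  proof (cases "j = 0")
    case True then show ?thesis using D0 by simp
  next
    case False
    then have "\<not> D j > 0" using not_less_Least[of j "\<lambda>j. 0 < j \<and> D j > 0"] that unfolding b_def by auto
    moreover have "j < n" using that bq q by auto
    ultimately show ?thesis using nh' by force
  qed
  define a where "a = (LEAST j. \<forall>l. j \<le> l \<and> l < n \<longrightarrow> D l > 0)"
  have an1: "\<forall>l. n - 1 \<le> l \<and> l < n \<longrightarrow> D l > 0"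
  proof (intro allI impI)
    fix l assume "n - 1 \<le> l \<and> l < n" then have "l = n - 1" by linarith
    then show "D l > 0" using Dn1 by simp
  qed
  have a1: "\<forall>l. a \<le> l \<and> l < n \<longrightarrow> D l > 0"
    unfolding a_def by (rule LeastI[of _ "n-1"]) (use an1 in auto)
  have an: "a \<le> n - 1" unfolding a_def by (rule Least_le) (use an1 in auto)
  have qa: "q < a" using a1 Dq q by (metis leI less_asym)
  have aneg: "D (a-1) < 0"
  proof -
    have "\<not> (\<forall>l. a - 1 \<le> l \<and> l < n \<longrightarrow> D l > 0)"
      using not_less_Least[of "a-1" "\<lambda>j. \<forall>l. j \<le> l \<and> l < n \<longrightarrow> D l > 0"] qa unfolding a_def by auto
    then obtain l where l: "a - 1 \<le> l" "l < n" "\<not> D l > 0" by auto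
    then have "\<not> a \<le> l" using a1 by auto
    then have "l = a - 1" using l by linarith
    then show ?thesis using l nh' by force
  qed
  have apos: "0 < a" using qa by simp
  have ban: "b < a" using bq qa q by auto
  define c where "c = (LEAST j. j < a \<and> (\<forall>l. j \<le> l \<and> l < a \<longrightarrow> D l < 0))"
  have ca1: "\<forall>l. a - 1 \<le> l \<and> l < a \<longrightarrow> D l < 0"
  proof (intro allI impI)
    fix l assume "a - 1 \<le> l \<and> l < a" then have "l = a - 1" by linarith
    then show "D l < 0" using aneg by simp
  qed
  have c1: "c < a \<and> (\<forall>l. c \<le> l \<and> l < a \<longrightarrow> D l < 0)"
    unfolding c_def by (rule LeastI[of _ "a-1"]) (use ca1 apos in auto)
  have bc: "b < c"
  proof (rule ccontr)
    assume "\<not> b < c" then have "c \<le> b" by simp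
    then have "D b < 0" using c1 ban by auto
    then show False using b1 by simp
  qed
  have cpos: "D (c-1) > 0"
  proof -
    have "\<not> (c - 1 < a \<and> (\<forall>l. c - 1 \<le> l \<and> l < a \<longrightarrow> D l < 0))"
      using not_less_Least[of "c-1" "\<lambda>j. j < a \<and> (\<forall>l. j \<le> l \<and> l < a \<longrightarrow> D l < 0)"] bc
      unfolding c_def by auto
    then obtain l where l: "c - 1 \<le> l" "l < a" "\<not> D l < 0" using c1 by auto
    then have "\<not> c \<le> l" using c1 by auto
    then have "l = c - 1" using l by linarith
    moreover have "l < n" using l an by auto
    ultimately show ?thesis using l nh' by force
  qed
  have hc: "h 0 \<le> h c"
  proof -
    have "0 < c" "c < n" using bc b1 c1 an by auto
    moreover have "Im (v c - v (c-1)) > 0" using cpos \<open>0 < c\<close> unfolding D_def by (simp add: Suc_diff_1)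
    moreover have "Im (v (Suc c) - v c) < 0" using c1 unfolding D_def by auto
    ultimately show ?thesis using low unfolding h_def by blast
  qed
  define e where "e = (LEAST j. b < j \<and> D j < 0)"
  have ba1: "b < a - 1" using bq qa q(1) by auto
  have e1: "b < e \<and> D e < 0" unfolding e_def by (rule LeastI[of _ "a-1"]) (use ba1 aneg in auto)
  have ea: "e \<le> a - 1" unfolding e_def by (rule Least_le) (use ba1 aneg in auto)
  have epos: "D l > 0" if "b \<le> l" "l < e" for l
  proof (cases "l = b")
    case True then show ?thesis using b1 by simp
  next
    case False
    then have "\<not> D l < 0" using not_less_Least[of l "\<lambda>j. b < j \<and> D j < 0"] that unfolding e_def by auto
    moreover have "l < n" using that ea an by auto
    ultimately show ?thesis using nh' by force
  qed
  have he: "h 0 \<le> h e"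
  proof -
    have "0 < e" "e < n" using e1 ea an by auto
    moreover have "b \<le> e - 1" using e1 by auto
    then have "Im (v e - v (e-1)) > 0" using epos[of "e-1"] e1 \<open>0 < e\<close> unfolding D_def by (simp add: Suc_diff_1)
    moreover have "Im (v (Suc e) - v e) < 0" using e1 unfolding D_def by auto
    ultimately show ?thesis using low unfolding h_def by blast
  qed
  have chD: "chmono v (-1) 0 b" unfolding chmono_def using bneg unfolding D_def by auto
  have chU: "chmono v 1 a n" unfolding chmono_def using a1 unfolding D_def by auto
  have chP: "chmono v (-1) c a" unfolding chmono_def using c1 unfolding D_def by auto
  have chN: "chmono v 1 b e" unfolding chmono_def using epos unfolding D_def by auto
  have hb0: "h b < h 0" using chmono_lt[OF chD, of 0 b] b1 unfolding h_def by auto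
  have ha0: "h a < h 0" using chmono_lt[OF chU, of a n] an n3 hn unfolding h_def by auto
  have hac: "h a < h c" using chmono_lt[OF chP, of c a] c1 unfolding h_def by auto
  have hbe: "h b < h e" using chmono_lt[OF chN, of b e] e1 unfolding h_def by auto
  have an': "a < n" using an n3 by auto
  have hn1: "h (n-1) < h 0" using Dn1 hn Dh[of "n-1"] n3 by (simp add: Suc_diff_1)
  have h10: "h 1 < h 0" using D0 Dh[of 0] by simp
  define F where "F y = Re (chainpt v a n y)" for y
  define G where "G y = Re (chainpt v 0 b y)" for y
  have top: "F y > G y" if y: "max (h (n-1)) (h 1) < y" "y < h 0" "h a < y" "h b < y" for y
  proof -
    have e1': "chainpt v a n y = v (n-1) + of_real ((y - h (n-1)) / (h (Suc (n-1)) - h (n-1))) * (v (Suc (n-1)) - v (n-1))"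
      using chainpt_at[OF chU, of "n-1" y] an n3 y hn unfolding h_def by (simp add: Suc_diff_1)
    have e2: "chainpt v 0 b y = v 0 + of_real ((y - h 0) / (h 1 - h 0)) * (v 1 - v 0)"
      using chainpt_at[OF chD, of 0 y] b1 y unfolding h_def by simp
    have vn: "v (Suc (n-1)) = v 0" using per n3 by (simp add: Suc_diff_1)
    have r1: "Im (chainpt v a n y) = y"
      using chainpt_props(1)[OF chU _, of y] an' y hn unfolding h_def by simp
    have r2: "Im (chainpt v 0 b y) = y"
      using chainpt_props(1)[OF chD _, of y] b1 y unfolding h_def by simp
    have p1: "Im (v 0 - v (n - 1)) > 0" using m0 per by simp
    have p2: "Im (v 1 - v 0) < 0" using m0 by simp
    have p4: "chainpt v a n y = v (n - 1) + complex_of_real ((y - h (n-1)) / (h (Suc (n-1)) - h (n-1))) * (v 0 - v (n - 1))"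
      using e1' vn by simp
    have p6: "Im (chainpt v a n y) = Im (chainpt v 0 b y)" using r1 r2 by simp
    have p7: "Im (chainpt v a n y) < Im (v 0)" using r1 y unfolding h_def by simp
    have "Re (chainpt v a n y) > Re (chainpt v 0 b y)"
      by (rule local_max[OF p1 p2 lt0 p4 e2 p6 p7])
    then show ?thesis unfolding F_def G_def .
  qed
  define Pp where "Pp y = Re (chainpt v c a y)" for y
  define Qn where "Qn y = Re (chainpt v b e y)" for y
  have cont: "continuous_on A (\<lambda>y. Re (chainpt v s t y))" for A s t
    by (intro continuous_on_Re continuous_chainpt)
  have cF: "continuous_on A F" for A unfolding F_def by (rule cont)
  have cG: "continuous_on A G" for A unfolding G_def by (rule cont)
  have cP: "continuous_on A Pp" for A unfolding Pp_def by (rule cont)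
  have cQ: "continuous_on A Qn" for A unfolding Qn_def by (rule cont)
  have ca: "c < a" and e0: "0 < e" and ena: "e < a" and en: "e < n" and b0: "0 < b"
    using c1 e1 ea apos b1 an' by auto
  have F0: "F (h 0) = Re (v 0)"
    using chainpt_end[OF chU an'] hn per unfolding F_def h_def by simp
  have G0: "G (h 0) = Re (v 0)"
    using chainpt_start[OF chD b0] unfolding G_def h_def by simp
  have Fa: "F (h a) = Re (v a)" using chainpt_start[OF chU an'] unfolding F_def h_def by simp
  have Pa: "Pp (h a) = Re (v a)" using chainpt_end[OF chP ca] unfolding Pp_def h_def by simp
  have Gb: "G (h b) = Re (v b)" using chainpt_end[OF chD b0] unfolding G_def h_def by simp
  have Qb: "Qn (h b) = Re (v b)" using chainpt_start[OF chN e1[THEN conjunct1]] unfolding Qn_def h_def by simp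
  have hyp_ex: "Im (v (Suc j) - v j) \<noteq> 0" if "j < n" for j using nh that by auto
  have FG: "F y \<noteq> G y" if "h a < y" "h b < y" "y < h 0" for y
    unfolding F_def G_def
    by (rule notouch[OF so per chU an' order.refl chD b0 _ _]) (use that hn ban an' in \<open>auto simp: h_def\<close>)
  have lt_a: "Im ((v (Suc a) - v a) * cnj (v a - v (a-1))) > 0"
    using lt[rule_format, of "a-1"] apos an' by simp
  have lt_b: "Im ((v (Suc b) - v b) * cnj (v b - v (b-1))) > 0"
    using lt[rule_format, of "b-1"] b0 ban an' by simp
  have ha1: "h a < h (a-1)" using aneg Dh[of "a-1"] apos by simp
  have ha2: "h a < h (Suc a)" using a1 Dh[of a] an' by auto
  have hb1: "h b < h (b-1)" using bneg[of "b-1"] Dh[of "b-1"] b0 by simp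
  have hb2: "h b < h (Suc b)" using b1 Dh[of b] by auto
  have segv: "x \<in> closed_segment (v x') (v (Suc x'))" if "x = v x'" for x x' using that by simp
  show False
  proof (cases "h b \<le> h a")
    case True
    define y2 where "y2 = (max (max (h (n-1)) (h 1)) (h a) + h 0) / 2"
    define y3 where "y3 = (h a + min (min (h (a-1)) (h (Suc a))) (h 0)) / 2"
    have y2: "y2 \<in> {h a<..<h 0}" "F y2 > G y2"
    proof -
      show "y2 \<in> {h a<..<h 0}" using hn1 h10 ha0 unfolding y2_def by auto
      show "F y2 > G y2" by (rule top) (use hn1 h10 ha0 True in \<open>auto simp: y2_def\<close>)
    qed
    have y3: "y3 \<in> {h a<..<h 0}" "Pp y3 < F y3"
    proof -
      show "y3 \<in> {h a<..<h 0}" using ha1 ha2 ha0 unfolding y3_def by auto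
      show "Pp y3 < F y3" unfolding Pp_def F_def
        by (rule bot_witness[OF chP chU ca an' lt_a])
           (use ha1 ha2 ha0 hc hn in \<open>auto simp: y3_def h_def\<close>)
    qed
    have nt: "\<forall>y\<in>{h a<..<h 0}. F y \<noteq> G y \<and> Pp y \<noteq> F y \<and> Pp y \<noteq> G y"
    proof
      fix y assume y: "y \<in> {h a<..<h 0}"
      have "F y \<noteq> G y" using FG y True by auto
      moreover have "Pp y \<noteq> F y" unfolding Pp_def F_def
        by (rule notouch[OF so per chP ca _ chU an' order.refl])
           (use y hc hn an' in \<open>auto simp: h_def\<close>)
      moreover have "Pp y \<noteq> G y" unfolding Pp_def G_def
        by (rule notouch[OF so per chP ca _ chD b0 _])
           (use y hc hn an' True bc ban in \<open>auto simp: h_def\<close>)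
      ultimately show "F y \<noteq> G y \<and> Pp y \<noteq> F y \<and> Pp y \<noteq> G y" by blast
    qed
    have "Pp (h 0) = F (h 0) \<or> G (h a) = F (h a)"
      by (rule squeeze_lemma[OF ha0 cF cG cP _ _ nt y2 y3]) (use F0 G0 Fa Pa in auto)
    then show False
    proof
      assume "Pp (h 0) = F (h 0)"
      define z where "z = chainpt v c a (h 0)"
      have rz: "- Im (v c) \<le> - h 0" "- h 0 \<le> - Im (v a)" using hc ha0 unfolding h_def by auto
      have "Im z = h 0" unfolding z_def using chainpt_props(1)[OF chP ca] rz by simp
      then have z0: "z = v 0" using \<open>Pp (h 0) = F (h 0)\<close> F0 unfolding Pp_def z_def[symmetric]
        by (simp add: complex_eq_iff h_def)
      obtain j where j: "c \<le> j" "j < a" "z \<in> closed_segment (v j) (v (Suc j))"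
        using chainpt_props(2)[OF chP ca] rz unfolding z_def by auto
      have "(a mod n = 0 \<and> z = v a) \<or> (b mod n = c \<and> z = v b)"
        by (rule touch_pt[OF so per j(1,2) _ order.refl b0 _ _ j(3)])
           (use an' ban bc z0 in auto)
      moreover have "b mod n = b" "a mod n = a" using ban an' by auto
      ultimately show False using apos bc by auto
    next
      assume "G (h a) = F (h a)"
      define z where "z = chainpt v 0 b (h a)"
      have rz: "- Im (v 0) \<le> - h a" "- h a \<le> - Im (v b)" using True ha0 unfolding h_def by auto
      have "Im z = h a" unfolding z_def using chainpt_props(1)[OF chD b0] rz by simp
      then have za: "z = v a" using \<open>G (h a) = F (h a)\<close> Fa unfolding G_def z_def[symmetric]
        by (simp add: complex_eq_iff h_def)
      obtain j where j: "0 \<le> j" "j < b" "z \<in> closed_segment (v j) (v (Suc j))"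
        using chainpt_props(2)[OF chD b0] rz unfolding z_def by auto
      have "(b mod n = a \<and> z = v b) \<or> (n mod n = 0 \<and> z = v n)"
        by (rule touch_pt[OF so per j(1,2) _ order.refl an' order.refl _ j(3)])
           (use an' ban za in auto)
      moreover have "b mod n = b" using ban an' by auto
      ultimately show False using ban za ha0 hn unfolding h_def by auto
    qed
  next
    case False
    then have hab: "h a < h b" by simp
    define y2 where "y2 = (max (max (h (n-1)) (h 1)) (h b) + h 0) / 2"
    define y3 where "y3 = (h b + min (min (h (b-1)) (h (Suc b))) (h 0)) / 2"
    have y2: "y2 \<in> {h b<..<h 0}" "- G y2 > - F y2"
    proof -
      show "y2 \<in> {h b<..<h 0}" using hn1 h10 hb0 unfolding y2_def by auto
      have "F y2 > G y2" by (rule top) (use hn1 h10 hb0 hab in \<open>auto simp: y2_def\<close>)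
      then show "- G y2 > - F y2" by simp
    qed
    have y3: "y3 \<in> {h b<..<h 0}" "- Qn y3 < - G y3"
    proof -
      show "y3 \<in> {h b<..<h 0}" using hb1 hb2 hb0 unfolding y3_def by auto
      have "Qn y3 > G y3" unfolding Qn_def G_def
        by (rule bot_witness[OF chD chN b0 e1[THEN conjunct1] lt_b])
           (use hb1 hb2 hb0 he in \<open>auto simp: y3_def h_def\<close>)
      then show "- Qn y3 < - G y3" by simp
    qed
    have nt: "\<forall>y\<in>{h b<..<h 0}. - G y \<noteq> - F y \<and> - Qn y \<noteq> - G y \<and> - Qn y \<noteq> - F y"
    proof
      fix y assume y: "y \<in> {h b<..<h 0}"
      have "F y \<noteq> G y" using FG y hab by auto
      moreover have "Qn y \<noteq> G y" unfolding Qn_def G_def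
        by (rule notouch[OF so per chN e1[THEN conjunct1] _ chD b0 _])
           (use y he en ban an' in \<open>auto simp: h_def\<close>)
      moreover have "Qn y \<noteq> F y" unfolding Qn_def F_def
        by (rule notouch[OF so per chN e1[THEN conjunct1] _ chU an' order.refl])
           (use y he en ena hab hn in \<open>auto simp: h_def\<close>)
      ultimately show "- G y \<noteq> - F y \<and> - Qn y \<noteq> - G y \<and> - Qn y \<noteq> - F y" by auto
    qed
    have cmG: "continuous_on A (\<lambda>y. - G y)" for A using cG by (intro continuous_intros)
    have cmF: "continuous_on A (\<lambda>y. - F y)" for A using cF by (intro continuous_intros)
    have cmQ: "continuous_on A (\<lambda>y. - Qn y)" for A using cQ by (intro continuous_intros)
    have "- Qn (h 0) = - G (h 0) \<or> - F (h b) = - G (h b)"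
      by (rule squeeze_lemma[OF hb0 cmG cmF cmQ _ _ nt y2 y3]) (use F0 G0 Gb Qb in auto)
    then show False
    proof
      assume as: "- Qn (h 0) = - G (h 0)"
      define z where "z = chainpt v b e (h 0)"
      have rz: "1 * Im (v b) \<le> 1 * h 0" "1 * h 0 \<le> 1 * Im (v e)" using he hb0 unfolding h_def by auto
      have "Im z = h 0" unfolding z_def using chainpt_props(1)[OF chN e1[THEN conjunct1]] rz by simp
      then have z0: "z = v 0" using as G0 unfolding Qn_def z_def[symmetric]
        by (simp add: complex_eq_iff h_def)
      obtain j where j: "b \<le> j" "j < e" "z \<in> closed_segment (v j) (v (Suc j))"
        using chainpt_props(2)[OF chN e1[THEN conjunct1]] rz unfolding z_def by auto
      have "(e mod n = 0 \<and> z = v e) \<or> (b mod n = b \<and> z = v b)"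
        by (rule touch_pt[OF so per j(1,2) _ order.refl b0 _ _ j(3)])
           (use en ban z0 an' in auto)
      moreover have "e mod n = e" "b mod n = b" using en ban an' by auto
      ultimately show False using e0 z0 hb0 unfolding h_def by auto
    next
      assume as: "- F (h b) = - G (h b)"
      define z where "z = chainpt v a n (h b)"
      have rz: "1 * Im (v a) \<le> 1 * h b" "1 * h b \<le> 1 * Im (v n)" using hab hb0 hn unfolding h_def by auto
      have "Im z = h b" unfolding z_def using chainpt_props(1)[OF chU an'] rz by simp
      then have zb: "z = v b" using as Gb unfolding F_def z_def[symmetric]
        by (simp add: complex_eq_iff h_def)
      obtain j where j: "a \<le> j" "j < n" "z \<in> closed_segment (v j) (v (Suc j))"
        using chainpt_props(2)[OF chU an'] rz unfolding z_def by auto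
      have "(n mod n = b \<and> z = v n) \<or> (e mod n = a \<and> z = v e)"
        by (rule touch_pt[OF so per j(1,2) order.refl order.refl e1[THEN conjunct1] _ _ j(3)])
           (use en ena zb in auto)
      moreover have "e mod n = e" using en by auto
      ultimately show False using ena b0 by auto
    qed
  qed
qed

definition lmax :: "nat \<Rightarrow> (nat \<Rightarrow> complex) \<Rightarrow> nat \<Rightarrow> bool" where
  "lmax n v i \<longleftrightarrow> Im (v (i + n) - v (i + n - 1)) > 0 \<and> Im (v (Suc i) - v i) < 0"

lemma mod_add_cancel_nat:
  fixes a b M n :: nat
  assumes "(a + M) mod n = (b + M) mod n" shows "a mod n = b mod n"
proof (cases "a \<le> b")
  case True
  then have "n dvd (b + M) - (a + M)" using mod_eq_dvd_iff_nat[of "a + M" "b + M" n] assms by simp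
  then have "n dvd b - a" by simp
  then show ?thesis using mod_eq_dvd_iff_nat[of a b n] True by simp
next
  case False
  then have "n dvd (a + M) - (b + M)" using mod_eq_dvd_iff_nat[of "b + M" "a + M" n] assms by simp
  then have "n dvd a - b" by simp
  then show ?thesis using mod_eq_dvd_iff_nat[of b a n] False by simp
qed

lemma per_mult: fixes v :: "nat \<Rightarrow> 'a" assumes "\<forall>j. v (j + n) = v j" shows "v (k + m * n) = v k"
proof (induction m)
  case 0 then show ?case by simp
next
  case (Suc m)
  have "v (k + Suc m * n) = v ((k + m * n) + n)" by (simp add: algebra_simps)
  also have "\<dots> = v (k + m * n)" using assms by blast
  finally show ?case using Suc by simp
qed

lemma per_mod: fixes v :: "nat \<Rightarrow> 'a" assumes "\<forall>j. v (j + n) = v j" shows "v j = v (j mod n)"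
proof -
  have "v (j mod n + (j div n) * n) = v (j mod n)" by (rule per_mult[OF assms])
  then show ?thesis by (simp add: mod_div_mult_eq)
qed

lemma per_eq: fixes v :: "nat \<Rightarrow> 'a" assumes "\<forall>j. v (j + n) = v j" "j mod n = k mod n" shows "v j = v k"
  using per_mod[OF assms(1), of j] per_mod[OF assms(1), of k] assms(2) by simp

lemma simp_ok_shift:
  fixes v :: "nat \<Rightarrow> complex"
  assumes per: "\<forall>j. v (j + n) = v j" and so: "simp_ok n v" and n: "n > 0"
  shows "simp_ok n (\<lambda>j. v (j + M))"
  unfolding simp_ok_def
proof (intro allI impI)
  fix i j z
  assume i: "i < n" and j: "j < n" and ij: "i \<noteq> j"
    and zi: "z \<in> closed_segment (v (i + M)) (v (Suc i + M))"
    and zj: "z \<in> closed_segment (v (j + M)) (v (Suc j + M))"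
  define i' where "i' = (i + M) mod n"
  define j' where "j' = (j + M) mod n"
  have vi: "v (i + M) = v i'" "v (Suc i + M) = v (Suc i')"
    unfolding i'_def using per_mod[OF per, of "i + M"] per_eq[OF per, of "Suc i + M" "Suc ((i + M) mod n)"]
    by (auto simp: mod_Suc_eq)
  have vj: "v (j + M) = v j'" "v (Suc j + M) = v (Suc j')"
    unfolding j'_def using per_mod[OF per, of "j + M"] per_eq[OF per, of "Suc j + M" "Suc ((j + M) mod n)"]
    by (auto simp: mod_Suc_eq)
  have i'n: "i' < n" "j' < n" unfolding i'_def j'_def using n by auto
  have "i' \<noteq> j'"
  proof
    assume "i' = j'"
    then have "(i + M) mod n = (j + M) mod n" unfolding i'_def j'_def .
    then have "i mod n = j mod n" by (rule mod_add_cancel_nat)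
    then show False using i j ij by simp
  qed
  then have "(j' = Suc i' mod n \<and> z = v j') \<or> (i' = Suc j' mod n \<and> z = v i')"
    using so i'n zi zj vi vj unfolding simp_ok_def by auto
  then show "(j = Suc i mod n \<and> z = v (j + M)) \<or> (i = Suc j mod n \<and> z = v (i + M))"
  proof
    assume a: "j' = Suc i' mod n \<and> z = v j'"
    then have "(j + M) mod n = (Suc i + M) mod n" unfolding i'_def j'_def by (simp add: mod_Suc_eq)
    then have "j mod n = Suc i mod n" by (rule mod_add_cancel_nat)
    then show ?thesis using a vj j by simp
  next
    assume a: "i' = Suc j' mod n \<and> z = v i'"
    then have "(i + M) mod n = (Suc j + M) mod n" unfolding i'_def j'_def by (simp add: mod_Suc_eq)
    then have "i mod n = Suc j mod n" by (rule mod_add_cancel_nat)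
    then show ?thesis using a vi i by simp
  qed
qed


lemma lmax_shift:
  fixes v :: "nat \<Rightarrow> complex"
  assumes per: "\<forall>j. v (j + n) = v j" and n: "n > 0"
  shows "lmax n (\<lambda>j. v (j + M)) i \<longleftrightarrow> lmax n v ((i + M) mod n)"
proof -
  define i' where "i' = (i + M) mod n"
  have e1: "v (i' + n) = v (i + n + M)"
  proof (rule per_eq[OF per])
    have "(i' + n) mod n = (i + M) mod n" unfolding i'_def by simp
    also have "\<dots> = ((i + M) + n) mod n" by simp
    also have "(i + M) + n = i + n + M" by simp
    finally show "(i' + n) mod n = (i + n + M) mod n" .
  qed
  have e2: "v (i' + n - 1) = v (i + n - 1 + M)"
  proof (rule per_eq[OF per])
    have "(i' + (n - 1)) mod n = (i + M + (n - 1)) mod n" unfolding i'_def by (simp add: mod_add_left_eq)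
    then show "(i' + n - 1) mod n = (i + n - 1 + M) mod n" using n by (simp add: algebra_simps)
  qed
  have e3: "v (Suc i') = v (Suc i + M)"
    by (rule per_eq[OF per]) (simp add: i'_def mod_Suc_eq)
  have e4: "v i' = v (i + M)" unfolding i'_def by (rule per_mod[OF per, symmetric])
  show ?thesis unfolding lmax_def i'_def[symmetric] e1 e2 e3 e4 by (simp add: algebra_simps)
qed

lemma lmax_pos:
  fixes w :: "nat \<Rightarrow> complex"
  assumes per: "\<forall>j. w (j + n) = w j" and i: "0 < i"
  shows "lmax n w i \<longleftrightarrow> Im (w i - w (i-1)) > 0 \<and> Im (w (Suc i) - w i) < 0"
proof -
  have "w (i + n) = w i" using per by blast
  moreover have "w (i + n - 1) = w (i - 1)" using per[rule_format, of "i-1"] i by (simp add: algebra_simps)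
  ultimately show ?thesis unfolding lmax_def by simp
qed

lemma T1:
  fixes v :: "nat \<Rightarrow> complex"
  assumes n3: "n \<ge> 3" and per: "\<forall>j. v (j + n) = v j" and so: "simp_ok n v"
    and nh: "\<forall>j. Im (v (Suc j) - v j) \<noteq> 0"
    and lt: "\<forall>j. Im ((v (Suc (Suc j)) - v (Suc j)) * cnj (v (Suc j) - v j)) > 0"
    and two: "i1 < n" "i2 < n" "i1 \<noteq> i2" "lmax n v i1" "lmax n v i2"
  shows False
proof -
  have n0: "n > 0" using n3 by simp
  define S where "S = {i. i < n \<and> lmax n v i}"
  have fS: "finite S" "S \<noteq> {}" unfolding S_def using two by auto
  define M where "M = arg_min_on (\<lambda>i. Im (v i)) S"
  have MS: "M \<in> S" unfolding M_def by (rule arg_min_if_finite(1)[OF fS])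
  have Mmin: "Im (v M) \<le> Im (v i)" if "i \<in> S" for i
    unfolding M_def by (rule arg_min_least[OF fS that])
  obtain q0 where q0: "q0 \<in> S" "q0 \<noteq> M" using two unfolding S_def by blast
  have Mn: "M < n" using MS unfolding S_def by simp
  have q0n: "q0 < n" using q0 unfolding S_def by simp
  define w where "w j = v (j + M)" for j
  have wper: "\<forall>j. w (j + n) = w j"
  proof
    fix j have "v (j + n + M) = v ((j + M) + n)" by (simp add: algebra_simps)
    then show "w (j + n) = w j" unfolding w_def using per by simp
  qed
  have wlmax: "lmax n w i \<longleftrightarrow> lmax n v ((i + M) mod n)" for i
    unfolding w_def by (rule lmax_shift[OF per n0])
  have w0: "lmax n w 0" using wlmax[of 0] MS Mn unfolding S_def by simp
  define q where "q = (q0 + n - M) mod n"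
  have qM: "(q + M) mod n = q0"
  proof -
    have "(q + M) mod n = (q0 + n - M + M) mod n" unfolding q_def by (simp add: mod_add_left_eq)
    also have "\<dots> = (q0 + n) mod n" using Mn by simp
    also have "\<dots> = q0" using q0n by simp
    finally show ?thesis .
  qed
  have q0': "0 < q"
  proof (rule ccontr)
    assume "\<not> 0 < q" then have "q = 0" by simp
    then show False using qM q0 Mn by simp
  qed
  have qn: "q < n" unfolding q_def using n0 by simp
  have wq: "lmax n w q" using wlmax[of q] qM q0 unfolding S_def by simp
  show False
  proof (rule T0[of n w q])
    show "n \<ge> 3" by (rule n3)
    show "w n = w 0" using wper[rule_format, of 0] by simp
    show "simp_ok n w" unfolding w_def by (rule simp_ok_shift[OF per so n0])
    show "\<forall>j<n. Im (w (Suc j) - w j) \<noteq> 0" unfolding w_def using nh by simp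
    show "\<forall>j. Suc j < n \<longrightarrow> 0 < Im ((w (Suc (Suc j)) - w (Suc j)) * cnj (w (Suc j) - w j))"
      unfolding w_def using lt by simp
    have l0: "Im (w (0 + n) - w (0 + n - 1)) > 0" "Im (w (Suc 0) - w 0) < 0"
      using w0 unfolding lmax_def by auto
    then show "Im (w n - w (n - 1)) > 0" "Im (w 1 - w 0) < 0" by auto
    have "0 < Im ((w (Suc (Suc (n-1))) - w (Suc (n-1))) * cnj (w (Suc (n-1)) - w (n-1)))"
      unfolding w_def using lt by simp
    moreover have "Suc (n-1) = n" using n0 by simp
    moreover have "w (Suc n) = w 1" using wper[rule_format, of 1] by simp
    moreover have "w n = w 0" using wper[rule_format, of 0] by simp
    ultimately show "0 < Im ((w 1 - w 0) * cnj (w 0 - w (n - 1)))" by simp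
    show "\<forall>i. 0 < i \<longrightarrow> i < n \<longrightarrow> 0 < Im (w i - w (i - 1)) \<longrightarrow> Im (w (Suc i) - w i) < 0 \<longrightarrow> Im (w 0) \<le> Im (w i)"
    proof (intro allI impI)
      fix i assume i: "0 < i" "i < n" "0 < Im (w i - w (i - 1))" "Im (w (Suc i) - w i) < 0"
      then have "lmax n w i" using lmax_pos[OF wper i(1)] by simp
      then have "(i + M) mod n \<in> S" using wlmax[of i] n0 unfolding S_def by simp
      then have "Im (v M) \<le> Im (v ((i + M) mod n))" by (rule Mmin)
      moreover have "v ((i + M) mod n) = w i" unfolding w_def using per_mod[OF per, of "i + M"] by simp
      ultimately show "Im (w 0) \<le> Im (w i)" unfolding w_def by simp
    qed
    show "0 < q" "q < n" by (rule q0', rule qn)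
    show "0 < Im (w q - w (q - 1))" "Im (w (Suc q) - w q) < 0"
      using wq lmax_pos[OF wper q0'] by auto
  qed
qed

lemma polar_form: "(z::complex) = of_real (cmod z) * cis (Arg z)"
  using rcis_cmod_Arg[of z] unfolding rcis_def by simp

lemma sin_shift_int: "sin (x + 2 * pi * of_int m) = sin x"
  using sin_add[of x "2 * pi * of_int m"] sin_int_2pin[of m] cos_int_2pin[of m] by simp

lemma Im_ofreal_cis: "Im (of_real a * cis t) = a * sin t"
  by simp

lemma cross_pi:
  fixes \<theta> :: "nat \<Rightarrow> real"
  assumes mono: "\<forall>j. \<theta> j < \<theta> (Suc j) \<and> \<theta> (Suc j) \<le> \<theta> j + pi/2"
    and c: "\<theta> 0 < c" "c \<le> \<theta> n" and cm: "c = pi + 2 * pi * of_int m"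
  shows "\<exists>j. 1 \<le> j \<and> j \<le> n \<and> \<theta> (j-1) < c \<and> c \<le> \<theta> j \<and> \<theta> j < c + pi/2
          \<and> sin (\<theta> (j-1)) > 0 \<and> sin (\<theta> j) \<le> 0"
proof -
  define j where "j = (LEAST j. c \<le> \<theta> j)"
  have j1: "c \<le> \<theta> j" unfolding j_def by (rule LeastI[of _ n]) (use c in auto)
  have jn: "j \<le> n" unfolding j_def by (rule Least_le) (use c in auto)
  have j0: "j \<noteq> 0"
  proof
    assume "j = 0" then show False using j1 c by simp
  qed
  have jm: "\<theta> (j-1) < c"
    using not_less_Least[of "j-1" "\<lambda>j. c \<le> \<theta> j"] j0 unfolding j_def[symmetric] by auto
  have step: "\<theta> j \<le> \<theta> (j-1) + pi/2" using mono[rule_format, of "j-1"] j0 by simp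
  have s1: "sin (\<theta> (j-1)) > 0"
  proof -
    have "sin (\<theta> (j-1)) = sin ((\<theta> (j-1) - 2 * pi * of_int m) + 2 * pi * of_int m)" by simp
    also have "\<dots> = sin (\<theta> (j-1) - 2 * pi * of_int m)" by (rule sin_shift_int)
    finally have e: "sin (\<theta> (j-1)) = sin (\<theta> (j-1) - 2 * pi * of_int m)" .
    have "0 < \<theta> (j-1) - 2 * pi * of_int m" using step j1 cm pi_gt_zero by linarith
    moreover have "\<theta> (j-1) - 2 * pi * of_int m < pi" using jm cm by linarith
    ultimately show ?thesis using e sin_gt_zero by simp
  qed
  have s2: "sin (\<theta> j) \<le> 0"
  proof -
    have "sin (\<theta> j) = sin ((\<theta> j - pi - 2 * pi * of_int m) + pi + 2 * pi * of_int m)" by simp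
    also have "\<dots> = sin ((\<theta> j - pi - 2 * pi * of_int m) + pi)" by (rule sin_shift_int)
    also have "\<dots> = - sin (\<theta> j - pi - 2 * pi * of_int m)" by (rule sin_periodic_pi)
    finally have e: "sin (\<theta> j) = - sin (\<theta> j - pi - 2 * pi * of_int m)" .
    have "0 \<le> \<theta> j - pi - 2 * pi * of_int m" using j1 cm by linarith
    moreover have "\<theta> j - pi - 2 * pi * of_int m \<le> pi" using step jm cm pi_gt_zero by linarith
    ultimately show ?thesis using e sin_ge_zero by simp
  qed
  show ?thesis using j0 jn jm j1 step s1 s2 by (intro exI[of _ j]) auto
qed

lemma two_max:
  fixes v :: "nat \<Rightarrow> complex" and \<beta> r :: "nat \<Rightarrow> real"
  assumes n: "n \<ge> 1" and per: "\<forall>j. v (j + n) = v j"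
    and nh: "\<forall>j. Im (v (Suc j) - v j) \<noteq> 0"
    and rat: "\<forall>j. v (Suc (Suc j)) - v (Suc j) = of_real (r j) * cis (\<beta> (Suc j)) * (v (Suc j) - v j)"
    and rpos: "\<forall>j. r j > 0"
    and bb: "\<forall>j. 0 < \<beta> j \<and> \<beta> j \<le> pi/2"
    and sum: "(\<Sum>j\<in>{1..n}. \<beta> j) \<ge> 4 * pi"
  shows "\<exists>i1 i2. i1 < n \<and> i2 < n \<and> i1 \<noteq> i2 \<and> lmax n v i1 \<and> lmax n v i2"
proof -
  define d where "d j = v (Suc j) - v j" for j
  define \<theta> where "\<theta> j = Arg (d 0) + (\<Sum>l\<in>{1..j}. \<beta> l)" for j
  have \<theta>S: "\<theta> (Suc j) = \<theta> j + \<beta> (Suc j)" for j unfolding \<theta>_def by simp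
  have dform: "d j = of_real (cmod (d j)) * cis (\<theta> j)" for j
  proof (induction j)
    case 0 then show ?case unfolding \<theta>_def using polar_form[of "d 0"] by simp
  next
    case (Suc j)
    have "d (Suc j) = of_real (r j) * cis (\<beta> (Suc j)) * d j" using rat unfolding d_def by simp
    also have "\<dots> = of_real (r j * cmod (d j)) * cis (\<theta> (Suc j))"
      by (subst Suc) (simp add: \<theta>S cis_mult[symmetric] algebra_simps)
    finally have e: "d (Suc j) = of_real (r j * cmod (d j)) * cis (\<theta> (Suc j))" .
    have rj: "r j > 0" using rpos by simp
    have "cmod (d (Suc j)) = \<bar>r j * cmod (d j)\<bar>" unfolding e norm_mult norm_cis norm_of_real by simp
    also have "\<dots> = r j * cmod (d j)" using rj by simp
    finally have "cmod (d (Suc j)) = r j * cmod (d j)" .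
    then show ?case using e by simp
  qed
  have imd: "Im (d j) = cmod (d j) * sin (\<theta> j)" for j by (subst dform) simp
  have dnz: "d j \<noteq> 0" for j
  proof
    assume "d j = 0" then have "Im (v (Suc j) - v j) = 0" unfolding d_def by simp
    then show False using nh by blast
  qed
  have mono: "\<forall>j. \<theta> j < \<theta> (Suc j) \<and> \<theta> (Suc j) \<le> \<theta> j + pi/2" using bb \<theta>S by auto
  have \<theta>n: "\<theta> n \<ge> \<theta> 0 + 4 * pi" unfolding \<theta>_def using sum by simp
  have \<theta>mono: "\<theta> j \<le> \<theta> k" if "j \<le> k" for j k
    using that
  proof (induction k)
    case 0 then show ?case by simp
  next
    case (Suc k) then show ?case using mono[rule_format, of k] by (cases "j = Suc k") auto
  qed
  have key: "lmax n v (j mod n)" if j: "1 \<le> j" "j \<le> n" "sin (\<theta> (j-1)) > 0" "sin (\<theta> j) \<le> 0" for j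
  proof -
    have p1: "Im (d (j-1)) > 0" using imd[of "j-1"] j dnz by simp
    have "Im (d j) \<noteq> 0" using nh unfolding d_def by simp
    then have p2: "Im (d j) < 0" using imd[of j] j(4) by (smt (verit) mult_nonneg_nonpos norm_ge_zero)
    have e1: "v (j mod n + n) = v j" using per_mod[OF per, of j] per_mod[OF per, of "j mod n + n"] by simp
    have e2: "v (j mod n + n - 1) = v (j - 1)"
    proof (rule per_eq[OF per])
      have "(j mod n + (n - 1)) mod n = (j + (n - 1)) mod n" by (simp add: mod_add_left_eq)
      also have "j + (n - 1) = (j - 1) + n" using j n by simp
      finally show "(j mod n + n - 1) mod n = (j - 1) mod n" using n by simp
    qed
    have e3: "v (Suc (j mod n)) = v (Suc j)" by (rule per_eq[OF per]) (simp add: mod_Suc_eq)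
    have e4: "v (j mod n) = v j" using per_mod[OF per, of j] by simp
    have "Suc (j - 1) = j" using j by simp
    then show ?thesis unfolding lmax_def e1 e2 e3 e4 using p1 p2 unfolding d_def by simp
  qed
  define m where "m = \<lfloor>(\<theta> 0 + pi) / (2 * pi)\<rfloor>"
  define c1 where "c1 = pi + 2 * pi * of_int m"
  have fl: "of_int m \<le> (\<theta> 0 + pi) / (2 * pi)" "(\<theta> 0 + pi) / (2 * pi) < of_int m + 1"
    unfolding m_def by linarith+
  have c1a: "\<theta> 0 < c1"
  proof -
    have "\<theta> 0 + pi < (of_int m + 1) * (2 * pi)" using fl(2) by (simp add: divide_less_eq)
    then show ?thesis unfolding c1_def by (simp add: algebra_simps)
  qed
  have c1b: "c1 \<le> \<theta> 0 + 2 * pi"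
  proof -
    have "of_int m * (2 * pi) \<le> \<theta> 0 + pi" using fl(1) by (simp add: le_divide_eq)
    then show ?thesis unfolding c1_def by (simp add: algebra_simps)
  qed
  obtain j1 where j1: "1 \<le> j1" "j1 \<le> n" "\<theta> (j1-1) < c1" "c1 \<le> \<theta> j1" "\<theta> j1 < c1 + pi/2"
      "sin (\<theta> (j1-1)) > 0" "sin (\<theta> j1) \<le> 0"
    using cross_pi[OF mono c1a _ c1_def] c1b \<theta>n by (smt (verit) pi_gt_zero)
  have c2: "c1 + 2 * pi = pi + 2 * pi * of_int (m + 1)" unfolding c1_def by (simp add: algebra_simps)
  obtain j2 where j2: "1 \<le> j2" "j2 \<le> n" "\<theta> (j2-1) < c1 + 2 * pi" "c1 + 2 * pi \<le> \<theta> j2"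
      "sin (\<theta> (j2-1)) > 0" "sin (\<theta> j2) \<le> 0"
    using cross_pi[OF mono _ _ c2] c1a c1b \<theta>n by (smt (verit) pi_gt_zero)
  have j12: "j1 < j2"
  proof (rule ccontr)
    assume "\<not> j1 < j2" then have "\<theta> j2 \<le> \<theta> j1" using \<theta>mono by simp
    then show False using j1 j2 pi_gt_zero by linarith
  qed
  have dist: "j1 mod n \<noteq> j2 mod n"
  proof (cases "j2 = n")
    case True then show ?thesis using j12 j1 j2 by simp
  next
    case False then show ?thesis using j12 j1 j2 by simp
  qed
  show ?thesis using key[OF j1(1,2,6,7)] key[OF j2(1,2,5,6)] dist n
    by (intro exI[of _ "j1 mod n"] exI[of _ "j2 mod n"]) auto
qed

lemma no_double:
  fixes v :: "nat \<Rightarrow> complex" and \<beta> r :: "nat \<Rightarrow> real"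
  assumes n3: "n \<ge> 3" and per: "\<forall>j. v (j + n) = v j" and so: "simp_ok n v"
    and nh: "\<forall>j. Im (v (Suc j) - v j) \<noteq> 0"
    and rat: "\<forall>j. v (Suc (Suc j)) - v (Suc j) = of_real (r j) * cis (\<beta> (Suc j)) * (v (Suc j) - v j)"
    and rpos: "\<forall>j. r j > 0"
    and bb: "\<forall>j. 0 < \<beta> j \<and> \<beta> j \<le> pi/2"
    and sum: "(\<Sum>j\<in>{1..n}. \<beta> j) \<ge> 4 * pi"
  shows False
proof -
  have lt: "\<forall>j. Im ((v (Suc (Suc j)) - v (Suc j)) * cnj (v (Suc j) - v j)) > 0"
  proof
    fix j
    define z where "z = v (Suc j) - v j"
    have zn: "z \<noteq> 0" using nh unfolding z_def by (metis zero_complex.sel(2))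
    have "(v (Suc (Suc j)) - v (Suc j)) * cnj z = of_real (r j) * cis (\<beta> (Suc j)) * z * cnj z"
      using rat[rule_format, of j] unfolding z_def by simp
    also have "\<dots> = of_real (r j) * cis (\<beta> (Suc j)) * (z * cnj z)" by (simp only: mult.assoc)
    also have "z * cnj z = of_real ((cmod z)\<^sup>2)" by (rule complex_norm_square[symmetric])
    finally have e: "(v (Suc (Suc j)) - v (Suc j)) * cnj z = of_real (r j * (cmod z)\<^sup>2) * cis (\<beta> (Suc j))"
      by (simp add: algebra_simps)
    have "sin (\<beta> (Suc j)) > 0" using bb sin_gt_zero[of "\<beta> (Suc j)"] pi_gt_zero
      by (smt (verit, best) field_sum_of_halves)
    moreover have "r j * (cmod z)\<^sup>2 > 0" using rpos zn by simp
    ultimately show "Im ((v (Suc (Suc j)) - v (Suc j)) * cnj (v (Suc j) - v j)) > 0"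
      unfolding z_def[symmetric] e by simp
  qed
  obtain i1 i2 where "i1 < n" "i2 < n" "i1 \<noteq> i2" "lmax n v i1" "lmax n v i2"
    using two_max[of n v r \<beta>] n3 per nh rat rpos bb sum by auto
  then show False using T1[OF n3 per so nh lt] by blast
qed

lemma vtx_per: "vtx n P (j + n) = vtx n P j" unfolding vtx_def by simp
lemma nxt_per: "nxt n P (j + n) = nxt n P j"
proof -
  have "Suc (j + n) = Suc j + n" by simp
  then have "Suc (j + n) mod n = Suc j mod n" by (metis mod_add_self2)
  then show ?thesis unfolding nxt_def by simp
qed
lemma prv_per: "prv n P (j + n) = prv n P j"
proof -
  have "(j + n + n - 1) mod n = (j + n - 1 + n) mod n" by (cases n) auto
  then show ?thesis unfolding prv_def by simp
qed
lemma turn_per: "turn_angle n P (j + n) = turn_angle n P j"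
  unfolding turn_angle_def vtx_per nxt_per prv_per ..
lemma interior_per: "interior_angle n P (j + n) = interior_angle n P j"
  unfolding interior_angle_def turn_per ..

lemma vtx_Suc: "vtx n P (Suc j) = nxt n P j" unfolding vtx_def nxt_def by simp
lemma prv_Suc: "n > 0 \<Longrightarrow> prv n P (Suc j) = vtx n P j"
  unfolding prv_def vtx_def by simp

lemma cis_sum: "finite A \<Longrightarrow> cis (\<Sum>j\<in>A. f j) = (\<Prod>j\<in>A. cis (f j))"
  by (induction A rule: finite_induct) (auto simp: cis_mult[symmetric])

lemma sgn_prod_c: "finite A \<Longrightarrow> sgn (\<Prod>j\<in>A. (f j :: complex)) = (\<Prod>j\<in>A. sgn (f j))"
  by (induction A rule: finite_induct) (auto simp: sgn_mult)

lemma turn_sum_int: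
  assumes n: "n > 0" and nz: "\<forall>j<n. nxt n P j - vtx n P j \<noteq> 0"
  shows "\<exists>k::int. (\<Sum>i<n. turn_angle n P i) = 2 * pi * of_int k"
proof -
  define d where "d j = nxt n P j - vtx n P j" for j
  have dper: "d j = d (j mod n)" for j
    unfolding d_def nxt_def vtx_def by (simp add: mod_Suc_eq)
  have dnz: "d j \<noteq> 0" for j using nz dper[of j] n unfolding d_def by (metis mod_less_divisor)
  define \<rho> where "\<rho> j = d (Suc j) / d j" for j
  have turn: "turn_angle n P (Suc j) = Arg (\<rho> j)" for j
    unfolding turn_angle_def \<rho>_def d_def vtx_Suc prv_Suc[OF n] nxt_def vtx_def
    by (simp add: mod_Suc_eq)
  have s1: "(\<Sum>i<n. turn_angle n P i) = (\<Sum>j<n. turn_angle n P (Suc j))"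
  proof -
    have "(\<Sum>i<Suc n. turn_angle n P i) = turn_angle n P 0 + (\<Sum>j<n. turn_angle n P (Suc j))"
      by (rule sum.lessThan_Suc_shift)
    moreover have "(\<Sum>i<Suc n. turn_angle n P i) = (\<Sum>i<n. turn_angle n P i) + turn_angle n P n"
      by simp
    moreover have "turn_angle n P n = turn_angle n P 0" using turn_per[of n P 0] by simp
    ultimately show ?thesis by simp
  qed
  have pd: "(\<Prod>j<n. d (Suc j)) = (\<Prod>j<n. d j)"
  proof -
    have "(\<Prod>i<Suc n. d i) = d 0 * (\<Prod>j<n. d (Suc j))" by (rule prod.lessThan_Suc_shift)
    moreover have "(\<Prod>i<Suc n. d i) = (\<Prod>i<n. d i) * d n" by simp
    moreover have "d n = d 0" using dper[of n] by simp
    ultimately show ?thesis using dnz[of 0] by simp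
  qed
  have p1: "(\<Prod>j<n. \<rho> j) = 1"
    unfolding \<rho>_def prod_dividef pd using dnz by (simp add: prod_zero_iff)
  have "cis (\<Sum>i<n. turn_angle n P i) = (\<Prod>j<n. cis (Arg (\<rho> j)))"
    unfolding s1 turn by (rule cis_sum) simp
  also have "\<dots> = (\<Prod>j<n. sgn (\<rho> j))"
    by (rule prod.cong) (auto simp: cis_Arg \<rho>_def dnz)
  also have "\<dots> = 1" using sgn_prod_c[of "{..<n}" \<rho>] p1 by simp
  finally have "cis (\<Sum>i<n. turn_angle n P i) = 1" .
  then have "cos (\<Sum>i<n. turn_angle n P i) = 1" by (metis cis.sel(1) one_complex.sel(1))
  then obtain x where "(\<Sum>i<n. turn_angle n P i) = of_int x * 2 * pi" using cos_one_2pi_int by auto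
  then show ?thesis by (intro exI[of _ x]) simp
qed

lemma ratio_form:
  assumes n: "n > 0" and nz: "nxt n P j - vtx n P j \<noteq> 0"
  shows "nxt n P (Suc j) - vtx n P (Suc j) =
     of_real (cmod ((nxt n P (Suc j) - vtx n P (Suc j)) / (nxt n P j - vtx n P j)))
      * cis (turn_angle n P (Suc j)) * (nxt n P j - vtx n P j)"
proof -
  define z where "z = (nxt n P (Suc j) - vtx n P (Suc j)) / (nxt n P j - vtx n P j)"
  have t: "turn_angle n P (Suc j) = Arg z"
    unfolding turn_angle_def z_def vtx_Suc prv_Suc[OF n] ..
  have "nxt n P (Suc j) - vtx n P (Suc j) = z * (nxt n P j - vtx n P j)" unfolding z_def using nz by simp
  also have "z = of_real (cmod z) * cis (Arg z)" by (rule polar_form)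
  finally show ?thesis unfolding t z_def[symmetric] by simp
qed

lemma choose_rot:
  fixes z :: "nat \<Rightarrow> complex"
  assumes "\<forall>j<n. z j \<noteq> 0"
  shows "\<exists>\<theta>. \<forall>j<n. Im (cis \<theta> * z j) \<noteq> 0"
proof -
  define B where "B = (\<Union>j\<in>{..<n}. range (\<lambda>i::int. of_int i * pi - Arg (z j)))"
  have "countable B" unfolding B_def by (intro countable_UN countable_image) auto
  then have "B \<noteq> UNIV" using uncountable_UNIV_real by auto
  then obtain \<theta> where th: "\<theta> \<notin> B" by auto
  have "Im (cis \<theta> * z j) \<noteq> 0" if j: "j < n" for j
  proof
    assume a: "Im (cis \<theta> * z j) = 0"
    have "cis \<theta> * z j = of_real (cmod (z j)) * cis (\<theta> + Arg (z j))"
      by (subst (1) polar_form[of "z j"]) (simp add: cis_mult[symmetric] algebra_simps)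
    then have "cmod (z j) * sin (\<theta> + Arg (z j)) = 0" using a by simp
    then have "sin (\<theta> + Arg (z j)) = 0" using assms j by simp
    then obtain i where "\<theta> + Arg (z j) = of_int i * pi" using sin_zero_iff_int2 by auto
    then have "\<theta> = of_int i * pi - Arg (z j)" by simp
    then have "\<theta> \<in> B" unfolding B_def using j by blast
    then show False using th by simp
  qed
  then show ?thesis by blast
qed

lemma simp_ok_map:
  fixes L :: "complex \<Rightarrow> complex"
  assumes sp: "simple_polygon n P" and n: "n > 0" and lin: "linear L" and inj: "inj L"
    and v: "\<forall>j. v j = L (P (j mod n))"
  shows "simp_ok n v"
  unfolding simp_ok_def
proof (intro allI impI)
  fix i j z
  assume i: "i < n" and j: "j < n" and ij: "i \<noteq> j"
    and zi: "z \<in> closed_segment (v i) (v (Suc i))" and zj: "z \<in> closed_segment (v j) (v (Suc j))"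
  have seg: "closed_segment (v k) (v (Suc k)) = L ` edge n P k" for k
    unfolding edge_def vtx_def nxt_def v[rule_format] closed_segment_linear_image[OF lin] by simp
  obtain x1 where x1: "x1 \<in> edge n P i" "z = L x1" using zi seg by auto
  obtain x2 where x2: "x2 \<in> edge n P j" "z = L x2" using zj seg by auto
  have x12: "x1 = x2" using x1 x2 inj by (auto dest: injD)
  have x: "x1 \<in> edge n P i \<inter> edge n P j" using x1 x2 x12 by simp
  have sp': "\<forall>i<n. \<forall>j<n. i \<noteq> j \<longrightarrow>
        (if j = (i + 1) mod n then edge n P i \<inter> edge n P j = {vtx n P j}
         else if i = (j + 1) mod n then edge n P i \<inter> edge n P j = {vtx n P i}
         else edge n P i \<inter> edge n P j = {})" using sp unfolding simple_polygon_def by blast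
  show "(j = Suc i mod n \<and> z = v j) \<or> (i = Suc j mod n \<and> z = v i)"
  proof (cases "j = (i + 1) mod n")
    case True
    then have "x1 = vtx n P j" using sp'[rule_format, OF i j ij] x by auto
    then show ?thesis using True x1 v j unfolding vtx_def by simp
  next
    case False
    show ?thesis
    proof (cases "i = (j + 1) mod n")
      case True
      then have "x1 = vtx n P i" using sp'[rule_format, OF i j ij] x False by auto
      then show ?thesis using True x1 v i unfolding vtx_def by simp
    next
      case False2: False
      then have "edge n P i \<inter> edge n P j = {}" using sp'[rule_format, OF i j ij] False by auto
      then show ?thesis using x by simp
    qed
  qed
qed

lemma angle_sum_core:
  fixes P :: "nat \<Rightarrow> complex" and T :: "complex \<Rightarrow> complex" and s :: real
  assumes n3: "n \<ge> 3" and nd: "\<forall>i<n. nxt n P i \<noteq> vtx n P i" and sp: "simple_polygon n P"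
    and ang: "\<forall>i<n. 0 < s * turn_angle n P i \<and> s * turn_angle n P i \<le> pi/2"
    and Tlin: "linear T" and Tinj: "inj T"
    and Tmult: "\<forall>a b. T (a * b) = T a * T b" and Tdiff: "\<forall>a b. T (a - b) = T a - T b"
    and Treal: "\<forall>r. T (of_real r) = of_real r" and Tcis: "\<forall>t. T (cis t) = cis (s * t)"
    and big: "(\<Sum>i<n. s * turn_angle n P i) \<ge> 4 * pi"
  shows False
proof -
  have n0: "n > 0" using n3 by simp
  define dP where "dP j = nxt n P j - vtx n P j" for j
  have dper: "dP j = dP (j mod n)" for j
    unfolding dP_def nxt_def vtx_def by (simp add: mod_Suc_eq)
  have dnz: "dP j \<noteq> 0" for j using nd dper[of j] n0 unfolding dP_def by (metis mod_less_divisor right_minus_eq)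
  have T0: "T 0 = 0" using Tlin by (simp add: linear_0)
  have Tnz: "T z \<noteq> 0" if "z \<noteq> 0" for z using Tinj that T0 by (metis injD)
  obtain \<theta> where th: "\<forall>j<n. Im (cis \<theta> * T (dP j)) \<noteq> 0"
    using choose_rot[of n "\<lambda>j. T (dP j)"] Tnz dnz by auto
  define L where "L z = cis \<theta> * T z" for z
  define v where "v j = L (P (j mod n))" for j
  have Llin: "linear L" unfolding L_def using linear_compose[OF Tlin linear_times[of "cis \<theta>"]]
    by (simp add: o_def)
  have Linj: "inj L" unfolding L_def using Tinj by (auto simp: inj_def)
  have so: "simp_ok n v" by (rule simp_ok_map[OF sp n0 Llin Linj]) (simp add: v_def)
  have per: "\<forall>j. v (j + n) = v j" unfolding v_def by simp
  have dv: "v (Suc j) - v j = cis \<theta> * T (dP j)" for j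
    unfolding v_def L_def dP_def nxt_def vtx_def Tdiff[rule_format] by (simp add: algebra_simps)
  have nh: "\<forall>j. Im (v (Suc j) - v j) \<noteq> 0"
  proof
    fix j show "Im (v (Suc j) - v j) \<noteq> 0" unfolding dv using th dper[of j] n0 by simp
  qed
  define \<beta> where "\<beta> j = s * turn_angle n P j" for j
  have bper: "\<beta> j = \<beta> (j mod n)" for j
    unfolding \<beta>_def using per_mod[of "turn_angle n P" n j] turn_per by simp
  have bb: "\<forall>j. 0 < \<beta> j \<and> \<beta> j \<le> pi/2" using ang bper n0 unfolding \<beta>_def
    by (metis mod_less_divisor)
  define r where "r j = cmod (dP (Suc j) / dP j)" for j
  have rpos: "\<forall>j. r j > 0" unfolding r_def using dnz by simp
  have rat: "\<forall>j. v (Suc (Suc j)) - v (Suc j) = of_real (r j) * cis (\<beta> (Suc j)) * (v (Suc j) - v j)"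
  proof
    fix j
    have "dP (Suc j) = of_real (r j) * cis (turn_angle n P (Suc j)) * dP j"
      using ratio_form[OF n0 dnz[of j, unfolded dP_def]] unfolding r_def dP_def by simp
    then have "T (dP (Suc j)) = of_real (r j) * cis (\<beta> (Suc j)) * T (dP j)"
      using Tmult Treal Tcis unfolding \<beta>_def by simp
    then show "v (Suc (Suc j)) - v (Suc j) = of_real (r j) * cis (\<beta> (Suc j)) * (v (Suc j) - v j)"
      unfolding dv by (simp add: algebra_simps)
  qed
  have sum: "(\<Sum>j\<in>{1..n}. \<beta> j) \<ge> 4 * pi"
  proof -
    have "(\<Sum>i<Suc n. \<beta> i) = \<beta> 0 + (\<Sum>j<n. \<beta> (Suc j))" by (rule sum.lessThan_Suc_shift)
    moreover have "(\<Sum>i<Suc n. \<beta> i) = (\<Sum>i<n. \<beta> i) + \<beta> n" by simp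
    moreover have "\<beta> n = \<beta> 0" using bper[of n] by simp
    moreover have "(\<Sum>j<n. \<beta> (Suc j)) = (\<Sum>j\<in>{1..n}. \<beta> j)"
      by (rule sum.reindex_bij_witness[of _ "\<lambda>j. j - 1" Suc]) auto
    ultimately have "(\<Sum>j\<in>{1..n}. \<beta> j) = (\<Sum>i<n. \<beta> i)" by simp
    then show ?thesis using big unfolding \<beta>_def by simp
  qed
  show False by (rule no_double[OF n3 per so nh rat rpos bb sum])
qed

lemma angle_sum:
  fixes P :: "nat \<Rightarrow> complex" and s :: real
  assumes n3: "n \<ge> 3" and nd: "\<forall>i<n. nxt n P i \<noteq> vtx n P i" and sp: "simple_polygon n P"
    and s: "s = 1 \<or> s = -1"
    and ang: "\<forall>i<n. 0 < s * turn_angle n P i \<and> s * turn_angle n P i \<le> pi/2"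
  shows "(\<Sum>i<n. s * turn_angle n P i) = 2 * pi"
proof -
  have n0: "n > 0" using n3 by simp
  obtain k :: int where k: "(\<Sum>i<n. turn_angle n P i) = 2 * pi * of_int k"
    using turn_sum_int[OF n0] nd by auto
  define K :: int where "K = (if s = 1 then k else - k)"
  have SK: "(\<Sum>i<n. s * turn_angle n P i) = 2 * pi * of_int K"
    unfolding sum_distrib_left[symmetric] k K_def using s by auto
  have pos: "(\<Sum>i<n. s * turn_angle n P i) > 0"
    by (rule sum_pos) (use ang n0 in auto)
  then have "2 * pi * of_int K > (0::real)" using SK by simp
  then have "of_int K > (0::real)" using pi_gt_zero by (simp add: zero_less_mult_iff)
  then have K1: "K \<ge> 1" by simp
  have "\<not> K \<ge> 2"
  proof
    assume K2: "K \<ge> 2"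
    have big: "(\<Sum>i<n. s * turn_angle n P i) \<ge> 4 * pi"
    proof -
      have "of_int K \<ge> (2::real)" using K2 by simp
      then have "2 * pi * of_int K \<ge> 2 * pi * 2" using pi_gt_zero by (intro mult_left_mono) auto
      then show ?thesis unfolding SK by simp
    qed
    show False
    proof (cases "s = 1")
      case True
      show False
      proof (rule angle_sum_core[OF n3 nd sp ang, of id])
        show "linear id" by (rule linear_id)
        show "inj id" by simp
      qed (use True big in simp_all)
    next
      case False
      then have sm: "s = -1" using s by simp
      show False
      proof (rule angle_sum_core[OF n3 nd sp ang, of cnj])
        show "linear cnj" by (rule linear_cnj)
        show "inj cnj" by (rule injI) simp
        show "\<forall>t. cnj (cis t) = cis (s * t)" using sm by (simp add: cis_cnj)
      qed (use big in simp_all)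
    qed
  qed
  then have "K = 1" using K1 by simp
  then show ?thesis using SK by simp
qed

lemma sgn_c: "sgn (z::complex) = z / of_real (cmod z)"
  by (simp add: sgn_div_norm scaleR_conv_of_real divide_inverse mult.commute)

lemma sgn_unit: "cmod (z::complex) = 1 \<Longrightarrow> sgn z = z"
  by (simp add: sgn_c)

lemma sgn_div_c: "sgn ((b::complex) / a) = sgn b / sgn a"
  by (simp add: sgn_c norm_divide field_simps)

lemma cis_double_minus1: "cis (2 * \<phi>) - 1 = cis \<phi> * (\<i> * of_real (2 * sin \<phi>))"
proof -
  have c: "cos (2 * \<phi>) = 1 - 2 * (sin \<phi>)\<^sup>2" by (rule cos_double_sin)
  have s: "sin (2 * \<phi>) = 2 * sin \<phi> * cos \<phi>" by (rule sin_double)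
  show ?thesis unfolding complex_eq_iff using c s by (simp add: power2_eq_square algebra_simps)
qed

lemma cis_double_aux: "cis (2 * \<phi>) * (\<i> * of_real (sin \<phi>) - of_real (cos \<phi>)) = - (of_real (cos \<phi>) + \<i> * of_real (sin \<phi>))"
proof -
  have c: "cos (2 * \<phi>) = cos \<phi> * cos \<phi> - sin \<phi> * sin \<phi>" using cos_double[of \<phi>] by (simp add: power2_eq_square)
  have s: "sin (2 * \<phi>) = 2 * sin \<phi> * cos \<phi>" by (rule sin_double)
  have p: "cos \<phi> * cos \<phi> + sin \<phi> * sin \<phi> = 1" by (rule sin_cos_squared_add3)
  have re: "- (cos (2 * \<phi>) * cos \<phi>) - sin (2 * \<phi>) * sin \<phi> = - cos \<phi>"
  proof -
    have "- (cos (2 * \<phi>) * cos \<phi>) - sin (2 * \<phi>) * sin \<phi> = - cos \<phi> * (cos \<phi> * cos \<phi> + sin \<phi> * sin \<phi>)"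
      unfolding c s by algebra
    also have "\<dots> = - cos \<phi>" by (simp only: p mult_1_right)
    finally show ?thesis .
  qed
  have im: "cos (2 * \<phi>) * sin \<phi> - sin (2 * \<phi>) * cos \<phi> = - sin \<phi>"
  proof -
    have "cos (2 * \<phi>) * sin \<phi> - sin (2 * \<phi>) * cos \<phi> = - sin \<phi> * (cos \<phi> * cos \<phi> + sin \<phi> * sin \<phi>)"
      unfolding c s by algebra
    also have "\<dots> = - sin \<phi>" by (simp only: p mult_1_right)
    finally show ?thesis .
  qed
  show ?thesis unfolding complex_eq_iff using re im by (simp add: algebra_simps)
qed

lemma sin_sgn_half:
  assumes s: "s = 1 \<or> s = -1" and t: "0 < s * \<tau>" "s * \<tau> \<le> pi/2"
  shows "sgn (sin (\<tau>/2)) = s"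
proof (cases "s = 1")
  case True
  then have "0 < \<tau>/2" "\<tau>/2 < pi" using t by auto
  then show ?thesis using True sin_gt_zero by simp
next
  case False
  then have s1: "s = -1" using s by simp
  then have "0 < -\<tau>/2" "-\<tau>/2 < pi" using t by auto
  then have "sin (-\<tau>/2) > 0" using sin_gt_zero by blast
  then have "sin (\<tau>/2) < 0" by simp
  then show ?thesis using s1 by simp
qed

lemma fold_vec:
  fixes a b :: complex and s \<tau> w :: real
  assumes a: "a \<noteq> 0" and b: "b \<noteq> 0" and \<tau>: "\<tau> = Arg (b / a)" and s: "s = 1 \<or> s = -1"
    and t: "0 < s * \<tau>" "s * \<tau> \<le> pi/2"
  shows "of_real ((w/2) / cos ((pi - s * \<tau>)/2)) * (\<i> * sgn (sgn b + sgn (- a)))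
           = - of_real (w/2) * sgn a * (of_real (s * cot (s * \<tau> / 2)) + \<i>)"
    and "of_real ((w/2) / cos ((pi - s * \<tau>)/2)) * (\<i> * sgn (sgn b + sgn (- a)))
           = of_real (w/2) * sgn b * (\<i> - of_real (s * cot (s * \<tau> / 2)))"
proof -
  define \<phi> where "\<phi> = \<tau> / 2"
  define u where "u = sgn a"
  have u1: "cmod u = 1" unfolding u_def using a by (simp add: norm_sgn)
  have "sgn (b / a) = cis \<tau>" unfolding \<tau> using a b by (simp add: cis_Arg)
  moreover have "u \<noteq> 0" using u1 by auto
  ultimately have eb: "sgn b = u * cis (2 * \<phi>)" unfolding u_def \<phi>_def sgn_div_c
    by (simp add: field_simps)
  have bis: "sgn b + sgn (- a) = u * cis \<phi> * \<i> * of_real (2 * sin \<phi>)"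
    unfolding eb sgn_minus u_def[symmetric]
    using cis_double_minus1[of \<phi>] by (simp add: algebra_simps)
  have ss: "sgn (sin \<phi>) = s" unfolding \<phi>_def by (rule sin_sgn_half[OF s t])
  have sn0: "sin \<phi> \<noteq> 0" using ss s by auto
  have sgbis: "sgn (sgn b + sgn (- a)) = u * cis \<phi> * \<i> * of_real s"
  proof -
    have "sgn (sgn b + sgn (- a)) = sgn u * sgn (cis \<phi>) * sgn \<i> * sgn (of_real (2 * sin \<phi>) :: complex)"
      unfolding bis by (simp only: sgn_mult)
    also have "sgn u = u" using u1 by (rule sgn_unit)
    also have "sgn (cis \<phi>) = cis \<phi>" by (rule sgn_unit) simp
    also have "sgn \<i> = \<i>" by (rule sgn_unit) simp
    also have "sgn (of_real (2 * sin \<phi>) :: complex) = of_real s"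
      unfolding sgn_of_real using ss by (simp add: sgn_mult)
    finally show ?thesis .
  qed
  have cosh: "cos ((pi - s * \<tau>)/2) = s * sin \<phi>"
  proof -
    have e: "(pi - s * \<tau>)/2 = pi/2 - s * \<phi>" unfolding \<phi>_def by (simp add: field_simps)
    have "cos ((pi - s * \<tau>)/2) = cos (pi/2 - s * \<phi>)" by (simp only: e)
    also have "\<dots> = sin (s * \<phi>)" using sin_cos_eq[of "s * \<phi>"] by simp
    finally have "cos ((pi - s * \<tau>)/2) = sin (s * \<phi>)" .
    also have "\<dots> = s * sin \<phi>" using s by auto
    finally show ?thesis .
  qed
  have cotv: "s * cot (s * \<tau> / 2) = cos \<phi> / sin \<phi>"
  proof -
    have "s * \<tau> / 2 = s * \<phi>" unfolding \<phi>_def by simp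
    then show ?thesis using s unfolding cot_def by auto
  qed
  have s2: "s * s = 1" using s by auto
  have X: "of_real ((w/2) / cos ((pi - s * \<tau>)/2)) * (\<i> * sgn (sgn b + sgn (- a)))
        = - of_real (w/2) * u * (of_real (cos \<phi> / sin \<phi>) + \<i>)"
    unfolding cosh sgbis using sn0 s2 s
    by (auto simp: complex_eq_iff field_simps cis.ctr)
  then show "of_real ((w/2) / cos ((pi - s * \<tau>)/2)) * (\<i> * sgn (sgn b + sgn (- a)))
           = - of_real (w/2) * sgn a * (of_real (s * cot (s * \<tau> / 2)) + \<i>)"
    unfolding cotv u_def by simp
  have "sgn b * (\<i> - of_real (cos \<phi> / sin \<phi>)) = u * (cis (2 * \<phi>) * (\<i> * of_real (sin \<phi>) - of_real (cos \<phi>))) / of_real (sin \<phi>)"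
    unfolding eb using sn0 by (simp add: field_simps)
  also have "\<dots> = - u * (of_real (cos \<phi> / sin \<phi>) + \<i>)"
    unfolding cis_double_aux using sn0 by (simp add: field_simps)
  finally have F: "sgn b * (\<i> - of_real (cos \<phi> / sin \<phi>)) = - u * (of_real (cos \<phi> / sin \<phi>) + \<i>)" .
  have "of_real (w/2) * sgn b * (\<i> - of_real (cos \<phi> / sin \<phi>)) = of_real (w/2) * (sgn b * (\<i> - of_real (cos \<phi> / sin \<phi>)))"
    by (simp only: mult.assoc)
  also have "\<dots> = - of_real (w/2) * u * (of_real (cos \<phi> / sin \<phi>) + \<i>)" unfolding F by simp
  finally show "of_real ((w/2) / cos ((pi - s * \<tau>)/2)) * (\<i> * sgn (sgn b + sgn (- a)))
           = of_real (w/2) * sgn b * (\<i> - of_real (s * cot (s * \<tau> / 2)))"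
    unfolding X cotv by simp
qed

lemma seg_sym:
  fixes V X :: complex
  assumes "-1 \<le> lam" "lam \<le> 1"
  shows "V + of_real lam * X \<in> closed_segment (V - X) (V + X)"
  unfolding in_segment using assms
  by (intro exI[of _ "(lam + 1) / 2"]) (auto simp: scaleR_conv_of_real complex_eq_iff field_simps)

lemma fold_line_eq:
  fixes P :: "nat \<Rightarrow> complex"
  assumes a: "vtx n P i - prv n P i \<noteq> 0" and b: "nxt n P i - vtx n P i \<noteq> 0"
    and s: "s = sgn (signed_area n P)" "s = 1 \<or> s = -1"
    and t: "0 < s * turn_angle n P i" "s * turn_angle n P i \<le> pi/2"
  defines "c \<equiv> cot (s * turn_angle n P i / 2)"
  shows "fold_line n P w i = closed_segment
            (vtx n P i - of_real (w/2) * sgn (nxt n P i - vtx n P i) * (\<i> - of_real (s * c)))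
            (vtx n P i + of_real (w/2) * sgn (nxt n P i - vtx n P i) * (\<i> - of_real (s * c)))"
    and "fold_line n P w i = closed_segment
            (vtx n P i - - of_real (w/2) * sgn (vtx n P i - prv n P i) * (of_real (s * c) + \<i>))
            (vtx n P i + - of_real (w/2) * sgn (vtx n P i - prv n P i) * (of_real (s * c) + \<i>))"
proof -
  have bis: "bisector_dir n P i = sgn (nxt n P i - vtx n P i) + sgn (- (vtx n P i - prv n P i))"
    unfolding bisector_dir_def by simp
  have ia: "interior_angle n P i / 2 = (pi - s * turn_angle n P i) / 2"
    unfolding interior_angle_def s(1) ..
  note fv = fold_vec[OF a b turn_angle_def[of n P i] s(2) t, of w]
  show "fold_line n P w i = closed_segment
            (vtx n P i - of_real (w/2) * sgn (nxt n P i - vtx n P i) * (\<i> - of_real (s * c)))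
            (vtx n P i + of_real (w/2) * sgn (nxt n P i - vtx n P i) * (\<i> - of_real (s * c)))"
    unfolding fold_line_def Let_def bis ia fv(2) c_def ..
  show "fold_line n P w i = closed_segment
            (vtx n P i - - of_real (w/2) * sgn (vtx n P i - prv n P i) * (of_real (s * c) + \<i>))
            (vtx n P i + - of_real (w/2) * sgn (vtx n P i - prv n P i) * (of_real (s * c) + \<i>))"
    unfolding fold_line_def Let_def bis ia fv(1) c_def ..
qed

lemma prv_mod: "prv n P (k mod n) = prv n P k"
proof (cases "n = 0")
  case True then show ?thesis by simp
next
  case False
  have "(k mod n + n - 1) mod n = (k mod n + (n - 1)) mod n" using False by (simp add: Nat.add_diff_assoc)
  also have "\<dots> = (k + (n - 1)) mod n" by (simp add: mod_add_left_eq)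
  also have "\<dots> = (k + n - 1) mod n" using False by (simp add: Nat.add_diff_assoc)
  finally have "(k mod n + n - 1) mod n = (k + n - 1) mod n" .
  then show ?thesis unfolding prv_def by simp
qed

lemma vtx_mod: "vtx n P (k mod n) = vtx n P k" unfolding vtx_def by simp

lemma nxt_mod: "nxt n P (k mod n) = nxt n P k" unfolding nxt_def by (simp add: mod_Suc_eq)

lemma prv_nz:
  assumes n: "n > 0" and nd: "\<forall>j<n. nxt n P j \<noteq> vtx n P j"
  shows "vtx n P i - prv n P i \<noteq> 0"
proof -
  define k where "k = (i + n - 1) mod n"
  have "nxt n P k = vtx n P i"
  proof -
    have "Suc k mod n = (i + n - 1 + 1) mod n" unfolding k_def by (simp add: mod_Suc_eq)
    also have "i + n - 1 + 1 = i + n" using n by simp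
    finally show ?thesis unfolding nxt_def vtx_def by simp
  qed
  moreover have "prv n P i = vtx n P k" unfolding prv_def vtx_def k_def by simp
  moreover have "k < n" unfolding k_def using n by simp
  ultimately show ?thesis using nd by auto
qed

lemma edge_ineq:
  fixes P :: "nat \<Rightarrow> complex"
  assumes n3: "n \<ge> 3" and i: "i < n" and nd: "\<forall>j<n. nxt n P j \<noteq> vtx n P j"
    and s: "s = sgn (signed_area n P)" "s = 1 \<or> s = -1"
    and ang: "\<forall>j<n. 0 < s * turn_angle n P j \<and> s * turn_angle n P j \<le> pi/2"
    and fr: "folded_ribbon n P w"
  shows "cmod (nxt n P i - vtx n P i) >
     (w/2) * (cot (s * turn_angle n P i / 2) + cot (s * turn_angle n P (Suc i mod n) / 2))"
proof (rule ccontr)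
  have n0: "n > 0" using n3 by simp
  define j where "j = Suc i mod n"
  have jn: "j < n" unfolding j_def using n0 by simp
  have ij: "i \<noteq> j"
  proof
    assume "i = j"
    then have "Suc i mod n = i" unfolding j_def by simp
    then show False using i n3 by (metis Suc_lessI mod_Suc mod_less n_not_Suc_n numeral_3_eq_3 Suc_le_lessD less_imp_le_nat le_neq_implies_less not_less_eq_eq)
  qed
  define d where "d = nxt n P i - vtx n P i"
  define e where "e = sgn d"
  define L where "L = cmod d"
  have dnz: "d \<noteq> 0" using nd i unfolding d_def by simp
  have dLe: "d = of_real L * e" unfolding L_def e_def by (simp add: sgn_c)
  have vj: "vtx n P j = nxt n P i" unfolding j_def vtx_mod vtx_Suc ..
  have pj: "prv n P j = vtx n P i" unfolding j_def prv_mod prv_Suc[OF n0] ..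
  have aj: "vtx n P j - prv n P j = d" unfolding vj pj d_def ..
  define c where "c = cot (s * turn_angle n P i / 2)"
  define c' where "c' = cot (s * turn_angle n P j / 2)"
  have cpos: "c > 0" unfolding c_def using ang i by (intro cot_gt_zero) auto
  have c'pos: "c' > 0" unfolding c'_def using ang jn by (intro cot_gt_zero) auto
  have w0: "w > 0" using fr unfolding folded_ribbon_def by simp
  have ss: "s * s = 1" using s(2) by auto
  have F1: "fold_line n P w i = closed_segment
            (vtx n P i - of_real (w/2) * e * (\<i> - of_real (s * c)))
            (vtx n P i + of_real (w/2) * e * (\<i> - of_real (s * c)))"
    unfolding e_def d_def c_def
    by (rule fold_line_eq(1)[OF prv_nz[OF n0 nd] _ s]) (use nd i ang in auto)
  have F2: "fold_line n P w j = closed_segment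
            (vtx n P j - - of_real (w/2) * e * (of_real (s * c') + \<i>))
            (vtx n P j + - of_real (w/2) * e * (of_real (s * c') + \<i>))"
    unfolding e_def c'_def aj[symmetric]
    by (rule fold_line_eq(2)[OF prv_nz[OF n0 nd] _ s]) (use nd jn ang in auto)
  assume "\<not> cmod (nxt n P i - vtx n P i) >
     (w/2) * (cot (s * turn_angle n P i / 2) + cot (s * turn_angle n P (Suc i mod n) / 2))"
  then have Lle: "L \<le> (w/2) * (c + c')" unfolding L_def d_def c_def c'_def j_def by simp
  define lam where "lam = - s * L / ((w/2) * (c + c'))"
  have den: "(w/2) * (c + c') > 0" using w0 cpos c'pos by simp
  have L0: "L \<ge> 0" unfolding L_def by simp
  have labs: "\<bar>lam\<bar> \<le> 1"
  proof -
    have "\<bar>lam\<bar> = L / ((w/2) * (c + c'))" unfolding lam_def using den L0 s(2) w0 cpos c'pos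
      by (auto simp: abs_mult abs_divide)
    also have "\<dots> \<le> 1" using Lle den by simp
    finally show ?thesis .
  qed
  have key: "L + lam * (w/2) * s * (c + c') = 0"
    unfolding lam_def using den s(2) by (auto simp: field_simps)
  define z where "z = vtx n P i + of_real lam * (of_real (w/2) * e * (\<i> - of_real (s * c)))"
  have z1: "z \<in> fold_line n P w i" unfolding F1 z_def
    by (rule seg_sym) (use labs in auto)
  have "vtx n P j = vtx n P i + of_real L * e" unfolding vj using dLe unfolding d_def by (simp add: algebra_simps)
  then have "z - (vtx n P j + of_real (- lam) * (- of_real (w/2) * e * (of_real (s * c') + \<i>)))
      = - of_real (L + lam * (w/2) * s * (c + c')) * e"
    unfolding z_def by (simp add: field_simps)
  then have "z = vtx n P j + of_real (- lam) * (- of_real (w/2) * e * (of_real (s * c') + \<i>))"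
    unfolding key by simp
  then have z2: "z \<in> fold_line n P w j" unfolding F2
    by (simp only:) (rule seg_sym, use labs in auto)
  have "fold_line n P w i \<inter> fold_line n P w j = {}"
    using fr i jn ij unfolding folded_ribbon_def by blast
  then show False using z1 z2 by blast
qed

lemma sin_le_mono:
  assumes "0 \<le> x" "x \<le> y" "y \<le> pi/2" shows "sin x \<le> sin y"
  using assms by (intro sin_monotone_2pi_le) auto

lemma cot_tangent:
  fixes x x0 :: real
  assumes x: "0 < x" "x < pi/2" and x0: "0 < x0" "x0 < pi/2"
  shows "cot x \<ge> cot x0 - (x - x0) / (sin x0)\<^sup>2"
proof -
  have D: "DERIV cot t :> - inverse ((sin t)\<^sup>2)" if "0 < t" "t < pi/2" for t
  proof (rule DERIV_cot)
    have "sin t > 0" using that by (intro sin_gt_zero) auto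
    then show "sin t \<noteq> 0" by simp
  qed
  have sx0: "sin x0 > 0" using x0 by (simp add: sin_gt_zero)
  consider "x = x0" | "x0 < x" | "x < x0" by linarith
  then show ?thesis
  proof cases
    case 1 then show ?thesis by simp
  next
    case 2
    obtain z where z: "x0 < z" "z < x" "cot x - cot x0 = (x - x0) * (- inverse ((sin z)\<^sup>2))"
      using MVT2[OF 2, of cot "\<lambda>t. - inverse ((sin t)\<^sup>2)"] D x x0 by force
    have "sin x0 \<le> sin z" using z x x0 by (intro sin_le_mono) auto
    then have "(sin x0)\<^sup>2 \<le> (sin z)\<^sup>2" using sx0 by (intro power_mono) auto
    then have "inverse ((sin z)\<^sup>2) \<le> inverse ((sin x0)\<^sup>2)" using sx0 by (intro le_imp_inverse_le) auto
    then have m: "(x - x0) * inverse ((sin z)\<^sup>2) \<le> (x - x0) * inverse ((sin x0)\<^sup>2)"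
      using 2 by (intro mult_left_mono) auto
    show ?thesis unfolding divide_inverse using z(3) m by linarith
  next
    case 3
    obtain z where z: "x < z" "z < x0" "cot x0 - cot x = (x0 - x) * (- inverse ((sin z)\<^sup>2))"
      using MVT2[OF 3, of cot "\<lambda>t. - inverse ((sin t)\<^sup>2)"] D x x0 by force
    have sz: "sin z > 0" using z x x0 by (intro sin_gt_zero) auto
    have "sin z \<le> sin x0" using z x x0 by (intro sin_le_mono) auto
    then have "(sin z)\<^sup>2 \<le> (sin x0)\<^sup>2" using sz by (intro power_mono) auto
    then have "inverse ((sin x0)\<^sup>2) \<le> inverse ((sin z)\<^sup>2)" using sz by (intro le_imp_inverse_le) auto
    then have m: "(x0 - x) * inverse ((sin x0)\<^sup>2) \<le> (x0 - x) * inverse ((sin z)\<^sup>2)"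
      using 3 by (intro mult_left_mono) auto
    have e: "(x - x0) * inverse ((sin x0)\<^sup>2) = - ((x0 - x) * inverse ((sin x0)\<^sup>2))" by (simp add: algebra_simps)
    show ?thesis unfolding divide_inverse e using z(3) m by linarith
  qed
qed

lemma jensen_cot:
  fixes x :: "nat \<Rightarrow> real"
  assumes x: "\<forall>i<n. 0 < x i \<and> x i < pi/2" and x0: "0 < x0" "x0 < pi/2"
    and sum: "(\<Sum>i<n. x i) = real n * x0"
  shows "(\<Sum>i<n. cot (x i)) \<ge> real n * cot x0"
proof -
  have "(\<Sum>i<n. cot (x i)) \<ge> (\<Sum>i<n. cot x0 - (x i - x0) / (sin x0)\<^sup>2)"
    by (rule sum_mono) (use cot_tangent x x0 in auto)
  also have "(\<Sum>i<n. cot x0 - (x i - x0) / (sin x0)\<^sup>2) = real n * cot x0 - ((\<Sum>i<n. x i) - real n * x0) / (sin x0)\<^sup>2"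
    by (simp add: sum_subtractf sum_divide_distrib[symmetric])
  also have "\<dots> = real n * cot x0" using sum by simp
  finally show ?thesis .
qed

lemma part1:
  fixes P :: "nat \<Rightarrow> complex" and w :: real
  assumes n4: "n \<ge> 4" and nd0: "nondegenerate_polygon n P" and sp: "simple_polygon n P"
    and angs: "\<forall>i<n. pi / 2 \<le> interior_angle n P i \<and> interior_angle n P i < pi"
    and fr: "folded_ribbon n P w"
  shows "ribbonlength n P w \<ge> real n * cot (pi / real n)"
proof -
  have n3: "n \<ge> 3" and n0: "n > 0" using n4 by auto
  have nd: "\<forall>i<n. nxt n P i \<noteq> vtx n P i" using nd0 unfolding nondegenerate_polygon_def by auto
  define s where "s = sgn (signed_area n P)"
  have ia: "interior_angle n P i = pi - s * turn_angle n P i" for i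
    unfolding interior_angle_def s_def ..
  have bpos: "0 < s * turn_angle n P i \<and> s * turn_angle n P i \<le> pi/2" if "i < n" for i
    using angs that unfolding ia by auto
  have ang: "\<forall>i<n. 0 < s * turn_angle n P i \<and> s * turn_angle n P i \<le> pi/2" using bpos by blast
  have s1: "s = 1 \<or> s = -1"
  proof -
    have "s \<noteq> 0" using bpos[of 0] n0 by auto
    then show ?thesis unfolding s_def by (auto simp: sgn_real_def split: if_splits)
  qed
  have sum2: "(\<Sum>i<n. s * turn_angle n P i) = 2 * pi"
    by (rule angle_sum[OF n3 nd sp s1 ang])
  define f where "f k = cot (s * turn_angle n P k / 2)" for k
  have fper: "f (Suc i mod n) = f (Suc i)" for i
    unfolding f_def using per_mod[of "turn_angle n P" n "Suc i"] turn_per by simp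
  have w0: "w > 0" using fr unfolding folded_ribbon_def by simp
  have E: "cmod (nxt n P i - vtx n P i) > (w/2) * (f i + f (Suc i))" if "i < n" for i
    using edge_ineq[OF n3 that nd s_def s1 ang fr] fper unfolding f_def by simp
  have shift: "(\<Sum>i<n. f (Suc i)) = (\<Sum>i<n. f i)"
  proof -
    have "(\<Sum>i<Suc n. f i) = f 0 + (\<Sum>j<n. f (Suc j))" by (rule sum.lessThan_Suc_shift)
    moreover have "(\<Sum>i<Suc n. f i) = (\<Sum>i<n. f i) + f n" by simp
    moreover have "f n = f 0" using fper[of "n - 1"] n0 by (simp add: f_def)
    ultimately show ?thesis by simp
  qed
  have "polygon_length n P > (\<Sum>i<n. (w/2) * (f i + f (Suc i)))"
    unfolding polygon_length_def by (rule sum_strict_mono) (use E n0 in auto)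
  also have "(\<Sum>i<n. (w/2) * (f i + f (Suc i))) = (w/2) * ((\<Sum>i<n. f i) + (\<Sum>i<n. f (Suc i)))"
    by (simp only: sum_distrib_left[symmetric] sum.distrib)
  also have "\<dots> = w * (\<Sum>i<n. f i)" unfolding shift by simp
  finally have L1: "polygon_length n P > w * (\<Sum>i<n. f i)" .
  have J: "(\<Sum>i<n. f i) \<ge> real n * cot (pi / real n)"
    unfolding f_def
  proof (rule jensen_cot)
    show "\<forall>i<n. 0 < s * turn_angle n P i / 2 \<and> s * turn_angle n P i / 2 < pi / 2"
      using ang pi_gt_zero by fastforce
    show "0 < pi / real n" using n0 by simp
    have "pi / real n \<le> pi / 4" using n4 pi_gt_zero by (intro divide_left_mono) auto
    then show "pi / real n < pi / 2" using pi_gt_zero by linarith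
    show "(\<Sum>i<n. s * turn_angle n P i / 2) = real n * (pi / real n)"
      using sum2 n0 by (simp add: sum_divide_distrib[symmetric])
  qed
  have "polygon_length n P > w * (real n * cot (pi / real n))"
    using L1 J w0 by (smt (verit) mult_left_mono)
  then show ?thesis unfolding ribbonlength_def using w0 by (simp add: field_simps)
qed

definition Ereg :: "nat \<Rightarrow> nat \<Rightarrow> complex" where
  "Ereg n k = cis (2 * pi * real k / real n)"

lemma Ereg_Suc: "n > 0 \<Longrightarrow> Ereg n (Suc k) = Ereg n k * cis (2 * pi / real n)"
  unfolding Ereg_def cis_mult by (rule arg_cong[where f=cis]) (simp add: field_simps)

lemma Ereg_add_n: "n > 0 \<Longrightarrow> Ereg n (k + n) = Ereg n k"
proof -
  assume n: "n > 0"
  have "2 * pi * real (k + n) / real n = 2 * pi * real k / real n + 2 * pi * 1" using n by (simp add: field_simps)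
  then have "Ereg n (k + n) = cis (2 * pi * real k / real n + 2 * pi * 1)"
    unfolding Ereg_def by (simp only:)
  also have "\<dots> = cis (2 * pi * real k / real n) * cis (2 * pi * 1)" by (simp only: cis_mult)
  finally show ?thesis unfolding Ereg_def by simp
qed

lemma Ereg_mod: "n > 0 \<Longrightarrow> Ereg n (k mod n) = Ereg n k"
  using per_mod[of "Ereg n" n k] Ereg_add_n by simp

lemma Ereg_norm: "cmod (Ereg n k) = 1" unfolding Ereg_def by simp

lemma reg_vtx: "n > 0 \<Longrightarrow> vtx n (Ereg n) i = Ereg n i" unfolding vtx_def by (rule Ereg_mod)
lemma reg_nxt: "n > 0 \<Longrightarrow> nxt n (Ereg n) i = Ereg n i * cis (2 * pi / real n)"
  unfolding nxt_def using Ereg_mod[of n "i+1"] Ereg_Suc by simp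
lemma reg_prv: "n > 0 \<Longrightarrow> prv n (Ereg n) i * cis (2 * pi / real n) = Ereg n i"
proof -
  assume n: "n > 0"
  have "prv n (Ereg n) i = Ereg n (i + n - 1)" unfolding prv_def by (rule Ereg_mod[OF n])
  moreover have "Ereg n (i + n - 1) * cis (2 * pi / real n) = Ereg n (Suc (i + n - 1))" using Ereg_Suc[OF n] by simp
  moreover have "Suc (i + n - 1) = i + n" using n by simp
  ultimately show ?thesis using Ereg_add_n[OF n] by simp
qed

lemma reg_area: "n \<ge> 3 \<Longrightarrow> signed_area n (Ereg n) > 0"
proof -
  assume n3: "n \<ge> 3"
  then have n: "n > 0" by simp
  have t: "Im (cnj (vtx n (Ereg n) i) * nxt n (Ereg n) i) = sin (2 * pi / real n)" for i
  proof -
    have c1: "cnj (Ereg n i) * Ereg n i = 1" using Ereg_norm[of n i]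
      by (metis complex_norm_square mult.commute of_real_1 power_one)
    have "cnj (Ereg n i) * (Ereg n i * cis (2 * pi / real n)) = (cnj (Ereg n i) * Ereg n i) * cis (2 * pi / real n)"
      by (simp only: mult.assoc)
    also have "\<dots> = cis (2 * pi / real n)" by (simp only: c1 mult_1_left)
    finally have eq: "cnj (Ereg n i) * (Ereg n i * cis (2 * pi / real n)) = cis (2 * pi / real n)" .
    show ?thesis unfolding reg_vtx[OF n] reg_nxt[OF n] eq by simp
  qed
  have "sin (2 * pi / real n) > 0"
  proof (rule sin_gt_zero)
    show "0 < 2 * pi / real n" using n by simp
    have "2 * pi / real n \<le> 2 * pi / 3" using n3 by (intro divide_left_mono) auto
    then show "2 * pi / real n < pi" using pi_gt_zero by linarith
  qed
  then show ?thesis unfolding signed_area_def t using n by simp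
qed

lemma reg_turn: "n \<ge> 3 \<Longrightarrow> turn_angle n (Ereg n) i = 2 * pi / real n"
proof -
  assume n3: "n \<ge> 3"
  then have n: "n > 0" by simp
  define \<omega> where "\<omega> = cis (2 * pi / real n)"
  define p where "p = prv n (Ereg n) i"
  have p\<omega>: "p * \<omega> = Ereg n i" unfolding p_def \<omega>_def by (rule reg_prv[OF n])
  have \<omega>1: "\<omega> \<noteq> 1"
  proof
    assume "\<omega> = 1"
    then have "sin (2 * pi / real n) = 0" unfolding \<omega>_def by (metis cis.sel(2) one_complex.sel(2))
    moreover have "sin (2 * pi / real n) > 0"
    proof (rule sin_gt_zero)
      show "0 < 2 * pi / real n" using n by simp
      have "2 * pi / real n \<le> 2 * pi / 3" using n3 by (intro divide_left_mono) auto
      then show "2 * pi / real n < pi" using pi_gt_zero by linarith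
    qed
    ultimately show False by simp
  qed
  have pnz: "p \<noteq> 0" using p\<omega> Ereg_norm[of n i] by auto
  have "(nxt n (Ereg n) i - vtx n (Ereg n) i) / (vtx n (Ereg n) i - prv n (Ereg n) i) = \<omega>"
    unfolding reg_nxt[OF n] reg_vtx[OF n] p_def[symmetric] \<omega>_def[symmetric] p\<omega>[symmetric]
    using pnz \<omega>1 by (simp add: field_simps)
  then have "turn_angle n (Ereg n) i = Arg \<omega>" unfolding turn_angle_def by simp
  also have "\<dots> = 2 * pi / real n" unfolding \<omega>_def
  proof (rule Arg_cis)
    have "2 * pi / real n \<le> 2 * pi / 3" using n3 by (intro divide_left_mono) auto
    moreover have "2 * pi / real n > 0" using n by simp
    ultimately show "2 * pi / real n \<in> {- pi<..pi}" using pi_gt_zero by simp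
  qed
  finally show ?thesis .
qed

lemma seg_inv:
  fixes V X z :: complex
  assumes "z \<in> closed_segment (V - X) (V + X)"
  shows "\<exists>lam. -1 \<le> lam \<and> lam \<le> 1 \<and> z = V + of_real lam * X"
proof -
  obtain u where u: "0 \<le> u" "u \<le> 1" "z = (1 - u) *\<^sub>R (V - X) + u *\<^sub>R (V + X)"
    using assms unfolding in_segment by auto
  show ?thesis
    by (rule exI[of _ "2 * u - 1"]) (use u in \<open>auto simp: scaleR_conv_of_real algebra_simps\<close>)
qed

lemma reg_b_sgn:
  assumes n3: "n \<ge> 3"
  shows "sgn (nxt n (Ereg n) i - vtx n (Ereg n) i) = Ereg n i * cis (pi / real n) * \<i>"
    and "cmod (nxt n (Ereg n) i - vtx n (Ereg n) i) = 2 * sin (pi / real n)"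
proof -
  have n: "n > 0" using n3 by simp
  define \<phi> where "\<phi> = pi / real n"
  have sp: "sin \<phi> > 0"
  proof (unfold \<phi>_def, rule sin_gt_zero)
    show "0 < pi / real n" using n by simp
    show "pi / real n < pi" using n3 pi_gt_zero by (simp add: divide_less_eq)
  qed
  have "nxt n (Ereg n) i - vtx n (Ereg n) i = Ereg n i * (cis (2 * \<phi>) - 1)"
    unfolding reg_nxt[OF n] reg_vtx[OF n] \<phi>_def by (simp add: algebra_simps)
  also have "cis (2 * \<phi>) - 1 = cis \<phi> * (\<i> * of_real (2 * sin \<phi>))" by (rule cis_double_minus1)
  finally have b: "nxt n (Ereg n) i - vtx n (Ereg n) i = Ereg n i * cis \<phi> * \<i> * of_real (2 * sin \<phi>)"
    by (simp add: algebra_simps)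
  have "sgn (Ereg n i * cis \<phi> * \<i> * of_real (2 * sin \<phi>)) = sgn (Ereg n i) * sgn (cis \<phi>) * sgn \<i> * sgn (of_real (2 * sin \<phi>) :: complex)"
    by (simp only: sgn_mult)
  also have "sgn (Ereg n i) = Ereg n i" by (rule sgn_unit[OF Ereg_norm])
  also have "sgn (cis \<phi>) = cis \<phi>" by (rule sgn_unit) simp
  also have "sgn \<i> = \<i>" by (rule sgn_unit) simp
  also have "sgn (of_real (2 * sin \<phi>) :: complex) = 1"
  proof -
    have "sgn (of_real (2 * sin \<phi>) :: complex) = of_real (sgn (2 * sin \<phi>))" by (rule sgn_of_real)
    also have "sgn (2 * sin \<phi>) = 1" using sp by simp
    finally show ?thesis by simp
  qed
  finally show "sgn (nxt n (Ereg n) i - vtx n (Ereg n) i) = Ereg n i * cis (pi / real n) * \<i>"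
    unfolding b \<phi>_def by simp
  show "cmod (nxt n (Ereg n) i - vtx n (Ereg n) i) = 2 * sin (pi / real n)"
    unfolding b norm_mult Ereg_norm using sp unfolding \<phi>_def by simp
qed

lemma reg_fold:
  assumes n4: "n \<ge> 4"
  shows "fold_line n (Ereg n) w i = closed_segment
     (Ereg n i - of_real (- (w/2) / sin (pi / real n)) * (\<i> * Ereg n i))
     (Ereg n i + of_real (- (w/2) / sin (pi / real n)) * (\<i> * Ereg n i))"
proof -
  have n3: "n \<ge> 3" and n: "n > 0" using n4 by auto
  define \<phi> where "\<phi> = pi / real n"
  have sp: "sin \<phi> > 0"
  proof (unfold \<phi>_def, rule sin_gt_zero)
    show "0 < pi / real n" using n by simp
    show "pi / real n < pi" using n3 pi_gt_zero by (simp add: divide_less_eq)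
  qed
  have s1: "(1::real) = sgn (signed_area n (Ereg n))" using reg_area[OF n3] by simp
  have tr: "turn_angle n (Ereg n) i = 2 * pi / real n" by (rule reg_turn[OF n3])
  have t1: "0 < 1 * turn_angle n (Ereg n) i" unfolding tr using n by simp
  have t2: "1 * turn_angle n (Ereg n) i \<le> pi / 2"
  proof -
    have "2 * pi / real n \<le> 2 * pi / 4" using n4 by (intro divide_left_mono) auto
    then show ?thesis unfolding tr by simp
  qed
  have bnz: "nxt n (Ereg n) i - vtx n (Ereg n) i \<noteq> 0"
    using reg_b_sgn(2)[OF n3, of i] sp unfolding \<phi>_def by auto
  have anz: "vtx n (Ereg n) i - prv n (Ereg n) i \<noteq> 0"
  proof -
    have "vtx n (Ereg n) i = Ereg n i" by (rule reg_vtx[OF n])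
    moreover have "prv n (Ereg n) i * cis (2 * pi / real n) = Ereg n i" by (rule reg_prv[OF n])
    moreover have "cis (2 * pi / real n) \<noteq> 1"
    proof
      assume "cis (2 * pi / real n) = 1"
      then have "cis (2 * \<phi>) = 1" unfolding \<phi>_def by simp
      then have "cis \<phi> * (\<i> * of_real (2 * sin \<phi>)) = 0" using cis_double_minus1[of \<phi>] by simp
      then show False using sp by simp
    qed
    ultimately show ?thesis using Ereg_norm[of n i] by (auto simp: algebra_simps)
  qed
  have half: "1 * turn_angle n (Ereg n) i / 2 = \<phi>" unfolding tr \<phi>_def by simp
  have fl: "fold_line n (Ereg n) w i = closed_segment
            (vtx n (Ereg n) i - of_real (w/2) * sgn (nxt n (Ereg n) i - vtx n (Ereg n) i) * (\<i> - of_real (1 * cot \<phi>)))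
            (vtx n (Ereg n) i + of_real (w/2) * sgn (nxt n (Ereg n) i - vtx n (Ereg n) i) * (\<i> - of_real (1 * cot \<phi>)))"
    using fold_line_eq(1)[OF anz bnz s1 _ t1 t2, of w] half by simp
  have key: "cis \<phi> * \<i> * (\<i> - of_real (cot \<phi>)) = - \<i> / of_real (sin \<phi>)"
  proof -
    have p: "cos \<phi> * cos \<phi> + sin \<phi> * sin \<phi> = 1" by (rule sin_cos_squared_add3)
    have "- sin \<phi> - cos \<phi> * (cos \<phi> / sin \<phi>) = - (cos \<phi> * cos \<phi> + sin \<phi> * sin \<phi>) / sin \<phi>"
      using sp by (simp add: field_simps del: sin_cos_squared_add3 sin_cos_squared_add sin_cos_squared_add2)
    also have "\<dots> = - 1 / sin \<phi>" by (simp only: p)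
    finally have q: "- sin \<phi> - cos \<phi> * (cos \<phi> / sin \<phi>) = - 1 / sin \<phi>" .
    then show ?thesis unfolding complex_eq_iff cot_def using sp by (simp add: field_simps)
  qed
  have X: "of_real (w/2) * sgn (nxt n (Ereg n) i - vtx n (Ereg n) i) * (\<i> - of_real (1 * cot \<phi>))
      = of_real (- (w/2) / sin (pi / real n)) * (\<i> * Ereg n i)"
  proof -
    have "of_real (w/2) * sgn (nxt n (Ereg n) i - vtx n (Ereg n) i) * (\<i> - of_real (1 * cot \<phi>))
        = of_real (w/2) * Ereg n i * (cis \<phi> * \<i> * (\<i> - of_real (cot \<phi>)))"
      unfolding reg_b_sgn(1)[OF n3] \<phi>_def by (simp only: mult_1_left mult.assoc)
    also have "\<dots> = of_real (- (w/2) / sin (pi / real n)) * (\<i> * Ereg n i)"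
      unfolding key using sp unfolding \<phi>_def by (simp add: field_simps)
    finally show ?thesis .
  qed
  show ?thesis using fl[unfolded X] by (simp only: reg_vtx[OF n])
qed

lemma cos_reg_bound:
  fixes i j n :: nat
  assumes "i < n" "j < n" "i \<noteq> j"
  shows "cos (2 * pi * (real j - real i) / real n) \<le> cos (2 * pi / real n)"
proof -
  define k where "k = (if i < j then j - i else i - j)"
  have k1: "1 \<le> k" "k < n" unfolding k_def using assms by auto
  have n: "n > 0" using assms by simp
  have "cos (2 * pi * (real j - real i) / real n) = cos (2 * pi * real k / real n)"
  proof (cases "i < j")
    case True then show ?thesis unfolding k_def by (simp add: of_nat_diff)
  next
    case False
    have kk: "real k = real i - real j" unfolding k_def using False by (simp add: of_nat_diff)
    have "2 * pi * (real j - real i) / real n = - (2 * pi * real k / real n)"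
      unfolding kk by (simp add: right_diff_distrib diff_divide_distrib)
    then show ?thesis by simp
  qed
  also have "\<dots> \<le> cos (2 * pi / real n)"
  proof (cases "2 * pi * real k / real n \<le> pi")
    case True
    show ?thesis
    proof (rule cos_monotone_0_pi_le)
      show "0 \<le> 2 * pi / real n" by simp
      show "2 * pi / real n \<le> 2 * pi * real k / real n" using k1 n by (simp add: divide_right_mono)
      show "2 * pi * real k / real n \<le> pi" by (rule True)
    qed
  next
    case False
    have e: "cos (2 * pi * real k / real n) = cos (2 * pi * real (n - k) / real n)"
    proof -
      have "2 * pi * real (n - k) / real n = 2 * pi - 2 * pi * real k / real n"
        using k1 n by (simp add: of_nat_diff field_simps)
      then show ?thesis by (simp add: cos_2pi_minus)
    qed
    show ?thesis unfolding e
    proof (rule cos_monotone_0_pi_le)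
      show "0 \<le> 2 * pi / real n" by simp
      show "2 * pi / real n \<le> 2 * pi * real (n - k) / real n" using k1 n by (simp add: divide_right_mono)
      have "2 * pi * real (n - k) / real n = 2 * pi - 2 * pi * real k / real n"
        using k1 n by (simp add: of_nat_diff field_simps)
      then show "2 * pi * real (n - k) / real n \<le> pi" using False by simp
    qed
  qed
  finally show ?thesis .
qed

lemma reg_disjoint:
  fixes t1 t2 h :: real
  assumes n3: "n \<ge> 3" and ij: "i < n" "j < n" "i \<noteq> j"
    and t2: "\<bar>t2\<bar> \<le> h" and hT: "h < tan (pi / real n)"
    and eq: "Ereg n i * (1 + \<i> * of_real t1) = Ereg n j * (1 + \<i> * of_real t2)"
  shows False
proof -
  have n: "n > 0" using n3 by simp
  define \<phi> where "\<phi> = pi / real n"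
  define \<rho> where "\<rho> = Ereg n j * cnj (Ereg n i)"
  have \<rho>c: "\<rho> = cis (2 * pi * (real j - real i) / real n)"
    unfolding \<rho>_def Ereg_def cis_cnj cis_mult by (rule arg_cong[where f=cis]) (simp add: diff_divide_distrib algebra_simps)
  define a where "a = Re \<rho>"
  define b where "b = Im \<rho>"
  have ab: "a * a + b * b = 1" unfolding a_def b_def \<rho>c by simp
  have abound: "a \<le> cos (2 * \<phi>)" unfolding a_def \<rho>c \<phi>_def using cos_reg_bound[OF ij] by simp
  have ci: "cnj (Ereg n i) * Ereg n i = 1" using Ereg_norm[of n i]
    by (metis complex_norm_square mult.commute of_real_1 power_one)
  have "cnj (Ereg n i) * (Ereg n i * (1 + \<i> * of_real t1)) = cnj (Ereg n i) * (Ereg n j * (1 + \<i> * of_real t2))"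
    using eq by simp
  then have "1 + \<i> * of_real t1 = \<rho> * (1 + \<i> * of_real t2)"
    unfolding \<rho>_def by (simp add: mult.assoc[symmetric] ci)
  then have re: "1 = a - b * t2" and im: "t1 = b + a * t2"
    unfolding a_def b_def complex_eq_iff by auto
  have phi: "0 < \<phi>" "\<phi> < pi / 2"
  proof -
    show "0 < \<phi>" unfolding \<phi>_def using n by simp
    have "pi / real n \<le> pi / 3" using n3 by (intro divide_left_mono) auto
    then show "\<phi> < pi / 2" unfolding \<phi>_def using pi_gt_zero by linarith
  qed
  have cphi: "cos \<phi> > 0" using phi by (intro cos_gt_zero) auto
  have sphi: "sin \<phi> > 0" using phi by (intro sin_gt_zero) auto
  define T where "T = tan \<phi>"
  have T0: "T > 0" unfolding T_def using cphi sphi by (simp add: tan_def)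
  have cos2: "cos (2 * \<phi>) = (1 - T * T) / (1 + T * T)"
  proof -
    have p: "cos \<phi> * cos \<phi> + sin \<phi> * sin \<phi> = 1" by (rule sin_cos_squared_add3)
    have "1 + T * T = (cos \<phi> * cos \<phi> + sin \<phi> * sin \<phi>) / (cos \<phi> * cos \<phi>)"
      unfolding T_def tan_def using cphi by (simp add: field_simps del: sin_cos_squared_add3 sin_cos_squared_add sin_cos_squared_add2)
    also have "\<dots> = 1 / (cos \<phi> * cos \<phi>)" by (simp only: p)
    finally have B: "1 + T * T = 1 / (cos \<phi> * cos \<phi>)" .
    have "(1 - T * T) / (1 + T * T) = (1 - T * T) * (cos \<phi> * cos \<phi>)" unfolding B by simp
    also have "\<dots> = cos \<phi> * cos \<phi> - sin \<phi> * sin \<phi>"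
      unfolding T_def tan_def using cphi by (simp add: field_simps del: sin_cos_squared_add3 sin_cos_squared_add sin_cos_squared_add2)
    also have "\<dots> = cos (2 * \<phi>)" by (simp add: cos_double power2_eq_square)
    finally show ?thesis by simp
  qed
  have tT: "t2 * t2 < T * T"
  proof -
    have "\<bar>t2\<bar> < T" using t2 hT unfolding T_def \<phi>_def by simp
    then have "\<bar>t2\<bar> * \<bar>t2\<bar> < T * T" using T0 by (intro mult_strict_mono) auto
    then show ?thesis by (simp add: abs_mult[symmetric])
  qed
  have mono: "(1 - T * T) / (1 + T * T) < (1 - t2 * t2) / (1 + t2 * t2)"
  proof -
    have p1: "1 + T * T > 0" "1 + t2 * t2 > 0" by (auto intro: add_pos_nonneg)
    have "(1 - T * T) * (1 + t2 * t2) < (1 - t2 * t2) * (1 + T * T)"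
      using tT by (simp add: algebra_simps)
    then show ?thesis using p1 by (simp add: field_simps)
  qed
  have "a = 1 + b * t2" using re by simp
  then have "(1 + b * t2) * (1 + b * t2) + b * b = 1" using ab by simp
  then have "b * (2 * t2 + b * (1 + t2 * t2)) = 0" by (simp add: algebra_simps)
  then consider "b = 0" | "2 * t2 + b * (1 + t2 * t2) = 0" by auto
  then show False
  proof cases
    case 1
    then have "a = 1" using re by simp
    moreover have "cos (2 * \<phi>) < 1"
    proof -
      have "(1 - T * T) / (1 + T * T) < 1" using T0 by (simp add: divide_less_eq add_pos_nonneg)
      then show ?thesis using cos2 by simp
    qed
    ultimately show False using abound by simp
  next
    case 2
    have p1: "1 + t2 * t2 > 0" by (auto intro: add_pos_nonneg)
    then have bv: "b = - 2 * t2 / (1 + t2 * t2)" using 2 by (simp add: field_simps)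
    have "a = (1 - t2 * t2) / (1 + t2 * t2)" using re p1 unfolding bv by (simp add: field_simps)
    then show False using abound cos2 mono by simp
  qed
qed

lemma part2:
  fixes n :: nat
  assumes n4: "n \<ge> 4"
  shows "\<forall>\<epsilon> > 0. \<exists>(P :: nat \<Rightarrow> complex) (w :: real).
            regular_polygon n P \<and> folded_ribbon n P w \<and>
            ribbonlength n P w < real n * cot (pi / real n) + \<epsilon>"
proof (intro allI impI)
  fix \<epsilon> :: real assume e: "\<epsilon> > 0"
  have n3: "n \<ge> 3" and n: "n > 0" using n4 by auto
  define \<phi> where "\<phi> = pi / real n"
  have phi: "0 < \<phi>" "\<phi> < pi / 2"
  proof -
    show "0 < \<phi>" unfolding \<phi>_def using n by simp
    have "pi / real n \<le> pi / 3" using n3 by (intro divide_left_mono) auto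
    then show "\<phi> < pi / 2" unfolding \<phi>_def using pi_gt_zero by linarith
  qed
  have cphi: "cos \<phi> > 0" using phi by (intro cos_gt_zero) auto
  have sphi: "sin \<phi> > 0" using phi by (intro sin_gt_zero) auto
  define T where "T = tan \<phi>"
  have T0: "T > 0" unfolding T_def using cphi sphi by (simp add: tan_def)
  define C where "C = real n * cot \<phi>"
  have cotT: "cot \<phi> = 1 / T" unfolding T_def cot_def tan_def using cphi sphi by simp
  have C0: "C > 0" unfolding C_def cotT using T0 n by simp
  define q where "q = C / (C + \<epsilon> / 2)"
  have q0: "q > 0" "q < 1" unfolding q_def using C0 e by (auto simp: divide_less_eq)
  define w where "w = 2 * sin \<phi> * T * q"
  have w0: "w > 0" unfolding w_def using sphi T0 q0 by simp
  define h where "h = (w/2) / sin \<phi>"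
  have hT: "h < tan (pi / real n)" unfolding h_def w_def T_def[symmetric] \<phi>_def[symmetric]
    using sphi T0 q0 by (simp add: field_simps)
  have pt: "\<exists>t. \<bar>t\<bar> \<le> h \<and> z = Ereg n k * (1 + \<i> * of_real t)" if "z \<in> fold_line n (Ereg n) w k" for z k
  proof -
    have zz: "z \<in> closed_segment
     (Ereg n k - of_real (- (w/2) / sin (pi / real n)) * (\<i> * Ereg n k))
     (Ereg n k + of_real (- (w/2) / sin (pi / real n)) * (\<i> * Ereg n k))"
      using that unfolding reg_fold[OF n4, of w k] .
    obtain lam where lam: "-1 \<le> lam" "lam \<le> 1"
      "z = Ereg n k + of_real lam * (of_real (- (w/2) / sin (pi / real n)) * (\<i> * Ereg n k))"
      using seg_inv[OF zz] by blast
    define t where "t = lam * (- h)"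
    have "z = Ereg n k * (1 + \<i> * of_real t)"
      unfolding lam(3) t_def h_def \<phi>_def by (simp add: algebra_simps)
    moreover have "\<bar>t\<bar> \<le> h"
    proof -
      have h0: "h \<ge> 0" unfolding h_def using w0 sphi by simp
      have "\<bar>t\<bar> = \<bar>lam\<bar> * h" unfolding t_def using h0 by (simp add: abs_mult)
      also have "\<dots> \<le> 1 * h" using lam h0 by (intro mult_right_mono) auto
      finally show ?thesis by simp
    qed
    ultimately show ?thesis by blast
  qed
  have fr: "folded_ribbon n (Ereg n) w"
    unfolding folded_ribbon_def
  proof (intro conjI allI impI w0)
    fix i j assume ij: "i < n" "j < n" "i \<noteq> j"
    show "fold_line n (Ereg n) w i \<inter> fold_line n (Ereg n) w j = {}"
    proof (rule ccontr)
      assume "fold_line n (Ereg n) w i \<inter> fold_line n (Ereg n) w j \<noteq> {}"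
      then obtain z where z: "z \<in> fold_line n (Ereg n) w i" "z \<in> fold_line n (Ereg n) w j" by blast
      obtain t1 where t1: "z = Ereg n i * (1 + \<i> * of_real t1)" using pt[OF z(1)] by blast
      obtain t2 where t2: "\<bar>t2\<bar> \<le> h" "z = Ereg n j * (1 + \<i> * of_real t2)" using pt[OF z(2)] by blast
      have "Ereg n i * (1 + \<i> * of_real t1) = Ereg n j * (1 + \<i> * of_real t2)" using t1 t2(2) by simp
      then show False by (rule reg_disjoint[OF n3 ij t2(1) hT])
    qed
  qed
  have reg: "regular_polygon n (Ereg n)"
    unfolding regular_polygon_def
    by (rule exI[of _ 0], rule exI[of _ 1], rule exI[of _ 0]) (simp add: Ereg_def)
  have len: "polygon_length n (Ereg n) = real n * (2 * sin \<phi>)"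
    unfolding polygon_length_def reg_b_sgn(2)[OF n3] \<phi>_def by simp
  have "ribbonlength n (Ereg n) w = C / q"
    unfolding ribbonlength_def len w_def C_def cotT using sphi T0 q0 by (simp add: field_simps)
  also have "C / q = C + \<epsilon> / 2" unfolding q_def using C0 e by (simp add: field_simps)
  finally have "ribbonlength n (Ereg n) w < real n * cot (pi / real n) + \<epsilon>"
    unfolding C_def \<phi>_def using e by simp
  then show "\<exists>(P :: nat \<Rightarrow> complex) (w :: real).
            regular_polygon n P \<and> folded_ribbon n P w \<and>
            ribbonlength n P w < real n * cot (pi / real n) + \<epsilon>"
    using reg fr by blast
qed

theorem theorem6p5:
  fixes n :: nat
  assumes "n \<ge> 4"
  shows "(\<forall>(P :: nat \<Rightarrow> complex) (w :: real).
            nondegenerate_polygon n P \<and> simple_polygon n P \<and>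
            (\<forall>i<n. pi / 2 \<le> interior_angle n P i \<and> interior_angle n P i < pi) \<and>
            folded_ribbon n P w
            \<longrightarrow> ribbonlength n P w \<ge> real n * cot (pi / real n))
       \<and> (\<forall>\<epsilon> > 0. \<exists>(P :: nat \<Rightarrow> complex) (w :: real).
            regular_polygon n P \<and> folded_ribbon n P w \<and>
            ribbonlength n P w < real n * cot (pi / real n) + \<epsilon>)"
proof (intro conjI)
  show "\<forall>(P :: nat \<Rightarrow> complex) (w :: real).
            nondegenerate_polygon n P \<and> simple_polygon n P \<and>
            (\<forall>i<n. pi / 2 \<le> interior_angle n P i \<and> interior_angle n P i < pi) \<and>
            folded_ribbon n P w
            \<longrightarrow> ribbonlength n P w \<ge> real n * cot (pi / real n)"
    using part1[OF assms] by blast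
  show "\<forall>\<epsilon> > 0. \<exists>(P :: nat \<Rightarrow> complex) (w :: real).
            regular_polygon n P \<and> folded_ribbon n P w \<and>
            ribbonlength n P w < real n * cot (pi / real n) + \<epsilon>"
    by (rule part2[OF assms])
qed

end
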